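(* For all integers $k,d\ge1$ there is a GJ algorithm which, given the entries of a matrix $Z\in\mathbb R^{k\times d}$ as input, outputs the entries of $Z^\dagger Z$ (the orthogonal projection onto the row space of $Z$). This algorithm has degree $O(k)$ and predicate complexity at most $2^k$. Furthermore, if $Z$ is promised to have rank $k$, there is such a GJ algorithm of degree $O(k)$ and predicate complexity $0$.
   Context: $M^\dagger$ denotes the Moore–Penrose pseudo-inverse. A GJ algorithm operates on real-valued inputs and performs only arithmetic operations $v''=v\odot v'$ with $\odot\in\{+,-,\times,\div\}$ and conditional statements "if $v\ge0$ then ... else ...", where $v,v'$ are inputs or previously computed values. Every value it computes is a rational function of the inputs; the degree of a rational function is the maximum of the degrees of numerator and denominator in reduced form. The degree of a GJ algorithm is the maximum degree of any rational function of the inputs it computes; its predicate complexity is the number of distinct rational functions appearing in its conditional statements. *)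

theory Defs
  imports "HOL-Library.Poly_Mapping" "HOL-Computational_Algebra.Fraction_Field"
          "Jordan_Normal_Form.DL_Rank"
begin

text \<open>The current values
 form a list whose first n entries are the inputs; an arithmetic step appends
 v_i op v_j; a conditional tests v_i \<ge> 0; the output step returns a list of values.\<close>

datatype gj_op = GAdd | GSub | GMul | GDiv

datatype gj =
    GOutput "nat list"
  | GCompute gj_op nat nat gj
  | GBranch nat gj gj

fun gj_apply_real :: "gj_op \<Rightarrow> real \<Rightarrow> real \<Rightarrow> real option" where
  "gj_apply_real GAdd a b = Some (a + b)"
| "gj_apply_real GSub a b = Some (a - b)"
| "gj_apply_real GMul a b = Some (a * b)"
| "gj_apply_real GDiv a b = (if b = 0 then None else Some (a / b))"

fun gj_exec :: "gj \<Rightarrow> real list \<Rightarrow> real list option" where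
  "gj_exec (GOutput is) vs =
     (if (\<forall>i\<in>set is. i < length vs) then Some (map (\<lambda>i. vs ! i) is) else None)"
| "gj_exec (GCompute f i j P) vs =
     (if i < length vs \<and> j < length vs then
        (case gj_apply_real f (vs ! i) (vs ! j) of
           None \<Rightarrow> None
         | Some v \<Rightarrow> gj_exec P (vs @ [v]))
      else None)"
| "gj_exec (GBranch i P Q) vs =
     (if i < length vs then (if vs ! i \<ge> 0 then gj_exec P vs else gj_exec Q vs) else None)"

fun gj_wf :: "gj \<Rightarrow> nat \<Rightarrow> bool" where
  "gj_wf (GOutput is) m = (\<forall>i\<in>set is. i < m)"
| "gj_wf (GCompute f i j P) m = (i < m \<and> j < m \<and> gj_wf P (Suc m))"
| "gj_wf (GBranch i P Q) m = (i < m \<and> gj_wf P m \<and> gj_wf Q m)"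

text \<open>Multivariate real polynomials in variables X_0, X_1, ...; monomials are
 finitely supported exponent vectors.\<close>

type_synonym mpoly = "(nat \<Rightarrow>\<^sub>0 nat) \<Rightarrow>\<^sub>0 real"
type_synonym ratfun = "mpoly fract"

definition mon_deg :: "(nat \<Rightarrow>\<^sub>0 nat) \<Rightarrow> nat" where
  "mon_deg m = (\<Sum>i\<in>Poly_Mapping.keys m. Poly_Mapping.lookup m i)"

definition mpoly_deg :: "mpoly \<Rightarrow> nat" where
  "mpoly_deg p = Max (insert 0 (mon_deg ` Poly_Mapping.keys p))"

definition mpoly_var :: "nat \<Rightarrow> mpoly" where
  "mpoly_var i = Poly_Mapping.single (Poly_Mapping.single i 1) 1"

text \<open>Degree of a rational function: max of the degrees of numerator and denominator
 in reduced form. Since a reduced representation simultaneously minimises the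
 degrees of numerator and denominator, this is the least such max over all
 representations.\<close>

definition ratfun_deg :: "ratfun \<Rightarrow> nat" where
  "ratfun_deg r = (LEAST D. \<exists>p q. q \<noteq> 0 \<and> r = Fract p q \<and> D = max (mpoly_deg p) (mpoly_deg q))"

fun gj_apply_sym :: "gj_op \<Rightarrow> ratfun \<Rightarrow> ratfun \<Rightarrow> ratfun" where
  "gj_apply_sym GAdd a b = a + b"
| "gj_apply_sym GSub a b = a - b"
| "gj_apply_sym GMul a b = a * b"
| "gj_apply_sym GDiv a b = a / b"

fun gj_sym_vals :: "gj \<Rightarrow> ratfun list \<Rightarrow> ratfun set" where
  "gj_sym_vals (GOutput is) vs = {}"
| "gj_sym_vals (GCompute f i j P) vs =
     (let v = gj_apply_sym f (vs ! i) (vs ! j) in insert v (gj_sym_vals P (vs @ [v])))"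
| "gj_sym_vals (GBranch i P Q) vs = gj_sym_vals P vs \<union> gj_sym_vals Q vs"

fun gj_sym_preds :: "gj \<Rightarrow> ratfun list \<Rightarrow> ratfun set" where
  "gj_sym_preds (GOutput is) vs = {}"
| "gj_sym_preds (GCompute f i j P) vs =
     (let v = gj_apply_sym f (vs ! i) (vs ! j) in gj_sym_preds P (vs @ [v]))"
| "gj_sym_preds (GBranch i P Q) vs = insert (vs ! i) (gj_sym_preds P vs \<union> gj_sym_preds Q vs)"

definition gj_inputs :: "nat \<Rightarrow> ratfun list" where
  "gj_inputs n = map (\<lambda>i. Fract (mpoly_var i) 1) [0..<n]"

text \<open>Degree of a GJ algorithm with n inputs (inputs themselves have degree 1).\<close>

definition gj_degree :: "nat \<Rightarrow> gj \<Rightarrow> nat" where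
  "gj_degree n P = Max (insert (if n = 0 then 0 else 1) (ratfun_deg ` gj_sym_vals P (gj_inputs n)))"

definition gj_pred_complexity :: "nat \<Rightarrow> gj \<Rightarrow> nat" where
  "gj_pred_complexity n P = card (gj_sym_preds P (gj_inputs n))"

text \<open>Moore--Penrose pseudo-inverse of a real k x d matrix (real case: conjugate transpose = transpose).\<close>

definition pinv :: "real mat \<Rightarrow> real mat" where
  "pinv Z = (THE X. X \<in> carrier_mat (dim_col Z) (dim_row Z) \<and>
      Z * X * Z = Z \<and> X * Z * X = X \<and>
      transpose_mat (Z * X) = Z * X \<and> transpose_mat (X * Z) = X * Z)"

text \<open>Input convention: the k*d inputs are the entries of Z in row-major order.\<close>

definition mat_of_input :: "nat \<Rightarrow> nat \<Rightarrow> real list \<Rightarrow> real mat" where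
  "mat_of_input k d xs = mat k d (\<lambda>(i, j). xs ! (i * d + j))"

text \<open>Output convention: the d*d entries of a d x d matrix in row-major order.\<close>

definition mat_entries :: "real mat \<Rightarrow> real list" where
  "mat_entries M = concat (map (\<lambda>p. map (\<lambda>q. M $$ (p, q)) [0..<dim_col M]) [0..<dim_row M])"

definition gj_computes_proj :: "nat \<Rightarrow> nat \<Rightarrow> (real mat \<Rightarrow> bool) \<Rightarrow> gj \<Rightarrow> bool" where
  "gj_computes_proj k d Prom P \<longleftrightarrow> gj_wf P (k * d) \<and>
     (\<forall>xs. length xs = k * d \<longrightarrow> Prom (mat_of_input k d xs) \<longrightarrow>
        gj_exec P xs = Some (mat_entries (pinv (mat_of_input k d xs) * mat_of_input k d xs)))"

end

theory Submission
  imports Defs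
begin


datatype expr = Inp nat | Op gj_op expr expr

fun opf :: "gj_op \<Rightarrow> 'a::field \<Rightarrow> 'a \<Rightarrow> 'a" where
  "opf GAdd a b = a + b" | "opf GSub a b = a - b" | "opf GMul a b = a * b" | "opf GDiv a b = a / b"

fun eval :: "'a::field list \<Rightarrow> expr \<Rightarrow> 'a" where
  "eval xs (Inp i) = xs ! i"
| "eval xs (Op f a b) = opf f (eval xs a) (eval xs b)"

fun inps :: "expr \<Rightarrow> nat set" where
  "inps (Inp i) = {i}" | "inps (Op f a b) = inps a \<union> inps b"

fun subs :: "expr \<Rightarrow> expr set" where
  "subs (Inp i) = {}" | "subs (Op f a b) = insert (Op f a b) (subs a \<union> subs b)"

type_synonym ins = "(gj_op \<times> nat \<times> nat) list"

fun code :: "expr \<Rightarrow> nat \<Rightarrow> ins \<times> nat" where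
  "code (Inp i) m = ([], i)"
| "code (Op f a b) m = (let (ia, ra) = code a m; (ib, rb) = code b (m + length ia)
      in (ia @ ib @ [(f, ra, rb)], m + length ia + length ib))"

fun codes :: "expr list \<Rightarrow> nat \<Rightarrow> ins \<times> nat list" where
  "codes [] m = ([], [])"
| "codes (e # es) m = (let (i1, r) = code e m; (i2, rs) = codes es (m + length i1) in (i1 @ i2, r # rs))"

fun emit :: "ins \<Rightarrow> gj \<Rightarrow> gj" where
  "emit [] P = P" | "emit ((f, i, j) # is) P = GCompute f i j (emit is P)"

fun srun :: "ins \<Rightarrow> 'a::field list \<Rightarrow> 'a list" where
  "srun [] vs = vs"
| "srun ((f, i, j) # is) vs = srun is (vs @ [opf f (vs ! i) (vs ! j)])"

fun wfins :: "ins \<Rightarrow> nat \<Rightarrow> bool" where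
  "wfins [] m = True"
| "wfins ((f, i, j) # is) m = (i < m \<and> j < m \<and> wfins is (Suc m))"

fun rok :: "ins \<Rightarrow> 'a::field list \<Rightarrow> bool" where
  "rok [] vs = True"
| "rok ((f, i, j) # is) vs = ((f = GDiv \<longrightarrow> vs ! j \<noteq> 0) \<and> rok is (vs @ [opf f (vs ! i) (vs ! j)]))"

lemma apply_real_opf: "gj_apply_real f a b = (if f = GDiv \<and> b = 0 then None else Some (opf f a b))"
  by (cases f) auto

lemma apply_sym_opf: "gj_apply_sym f a b = opf f a b"
  by (cases f) auto

lemma srun_append: "srun (is1 @ is2) vs = srun is2 (srun is1 vs)"
  by (induction is1 vs rule: srun.induct) auto

lemma srun_ext: "\<exists>zs. srun is vs = vs @ zs \<and> length zs = length is"
proof (induction "is" vs rule: srun.induct)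
  case (2 f i j "is" vs)
  then obtain zs where "srun is (vs @ [opf f (vs ! i) (vs ! j)]) = (vs @ [opf f (vs ! i) (vs ! j)]) @ zs \<and> length zs = length is"
    by blast
  then show ?case by (intro exI[of _ "opf f (vs ! i) (vs ! j) # zs"]) auto
qed auto

lemma srun_len[simp]: "length (srun is vs) = length vs + length is"
  using srun_ext[of "is" vs] by auto

lemma srun_nth: "k < length vs \<Longrightarrow> srun is vs ! k = vs ! k"
  using srun_ext[of "is" vs] by (auto simp: nth_append)

lemma wfins_append: "wfins (is1 @ is2) m = (wfins is1 m \<and> wfins is2 (m + length is1))"
  by (induction is1 m rule: wfins.induct) auto

lemma rok_append: "rok (is1 @ is2) vs = (rok is1 vs \<and> rok is2 (srun is1 vs))"
  by (induction is1 vs rule: rok.induct) auto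

lemma exec_emit: "wfins is (length vs) \<Longrightarrow> rok is vs \<Longrightarrow> gj_exec (emit is P) vs = gj_exec P (srun is vs)"
  by (induction "is" vs rule: rok.induct) (auto simp: apply_real_opf)

lemma wf_emit: "gj_wf (emit is P) m = (wfins is m \<and> gj_wf P (m + length is))"
  by (induction "is" m rule: wfins.induct) auto

lemma preds_emit: "gj_sym_preds (emit is P) vs = gj_sym_preds P (srun is vs)"
  by (induction "is" vs rule: srun.induct) (auto simp: apply_sym_opf Let_def)

lemma vals_emit: "gj_sym_vals (emit is P) vs = set (drop (length vs) (srun is vs)) \<union> gj_sym_vals P (srun is vs)"
proof (induction "is" vs rule: srun.induct)
  case (2 f i j "is" vs)
  have "drop (length vs) (srun is (vs @ [opf f (vs ! i) (vs ! j)]))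
     = opf f (vs ! i) (vs ! j) # drop (Suc (length vs)) (srun is (vs @ [opf f (vs ! i) (vs ! j)]))"
    using srun_ext[of "is" "vs @ [opf f (vs ! i) (vs ! j)]"] by auto
  then show ?case using 2 by (auto simp: apply_sym_opf Let_def)
qed auto

lemma code_props:
  fixes xs :: "'a::field list"
  assumes "inps e \<subseteq> {..<length xs}" "length xs \<le> m"
  shows "wfins (fst (code e m)) m \<and> snd (code e m) < m + length (fst (code e m)) \<and>
    (\<forall>ys. length (xs @ ys) = m \<longrightarrow>
       srun (fst (code e m)) (xs @ ys) ! snd (code e m) = eval xs e \<and>
       set (drop m (srun (fst (code e m)) (xs @ ys))) \<subseteq> eval xs ` subs e \<and>
       ((\<forall>a b. Op GDiv a b \<in> subs e \<longrightarrow> eval xs b \<noteq> 0) \<longrightarrow> rok (fst (code e m)) (xs @ ys)))"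
  using assms
proof (induction e arbitrary: m)
  case (Inp i)
  then show ?case by (auto simp: nth_append)
next
  case (Op f a b)
  obtain ia ra where ca: "code a m = (ia, ra)" by fastforce
  obtain ib rb where cb: "code b (m + length ia) = (ib, rb)" by fastforce
  have IA: "wfins ia m \<and> ra < m + length ia \<and> (\<forall>ys. length (xs @ ys) = m \<longrightarrow>
       srun ia (xs @ ys) ! ra = eval xs a \<and>
       set (drop m (srun ia (xs @ ys))) \<subseteq> eval xs ` subs a \<and>
       ((\<forall>a' b'. Op GDiv a' b' \<in> subs a \<longrightarrow> eval xs b' \<noteq> 0) \<longrightarrow> rok ia (xs @ ys)))"
    using Op.IH(1)[of m] Op.prems ca by auto
  have IB: "wfins ib (m + length ia) \<and> rb < m + length ia + length ib \<and> (\<forall>ys. length (xs @ ys) = m + length ia \<longrightarrow>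
       srun ib (xs @ ys) ! rb = eval xs b \<and>
       set (drop (m + length ia) (srun ib (xs @ ys))) \<subseteq> eval xs ` subs b \<and>
       ((\<forall>a' b'. Op GDiv a' b' \<in> subs b \<longrightarrow> eval xs b' \<noteq> 0) \<longrightarrow> rok ib (xs @ ys)))"
    using Op.IH(2)[of "m + length ia"] Op.prems cb by auto
  note IA3 = IA[THEN conjunct2, THEN conjunct2, rule_format]
  note IB3 = IB[THEN conjunct2, THEN conjunct2, rule_format]
  have c: "code (Op f a b) m = (ia @ ib @ [(f, ra, rb)], m + length ia + length ib)"
    using ca cb by simp
  show ?case
  proof (simp only: c fst_conv snd_conv, intro conjI allI impI)
    show "wfins (ia @ ib @ [(f, ra, rb)]) m" using IA IB by (auto simp: wfins_append)
    show "m + length ia + length ib < m + length (ia @ ib @ [(f, ra, rb)])" by simp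
  next
    fix ys :: "'a list" assume len: "length (xs @ ys) = m"
    obtain za where za: "srun ia (xs @ ys) = xs @ ys @ za" "length za = length ia"
      using srun_ext[of ia "xs @ ys"] by auto
    obtain zb where zb: "srun ib (xs @ ys @ za) = xs @ ys @ za @ zb" "length zb = length ib"
      using srun_ext[of ib "xs @ ys @ za"] by auto
    have A: "(xs @ ys @ za) ! ra = eval xs a" using IA len za by auto
    have A': "(xs @ ys @ za @ zb) ! ra = eval xs a" using A IA len za
      by (metis append.assoc length_append nth_append)
    have B: "(xs @ ys @ za @ zb) ! rb = eval xs b" using IB3[of "ys @ za"] len za zb by auto
    have run: "srun (ia @ ib @ [(f, ra, rb)]) (xs @ ys) = xs @ ys @ za @ zb @ [opf f (eval xs a) (eval xs b)]"
      using za zb A' B by (simp add: srun_append)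
    show "srun (ia @ ib @ [(f, ra, rb)]) (xs @ ys) ! (m + length ia + length ib) = eval xs (Op f a b)"
    proof -
      have "m + length ia + length ib = length (xs @ ys @ za @ zb)" using len za zb by simp
      moreover have "xs @ ys @ za @ zb @ [opf f (eval xs a) (eval xs b)] = (xs @ ys @ za @ zb) @ [opf f (eval xs a) (eval xs b)]" by simp
      ultimately show ?thesis using run by (metis eval.simps(2) nth_append_length)
    qed
    have s1: "set za \<subseteq> eval xs ` subs a" using IA3[of ys] len za by simp
    have s2: "set zb \<subseteq> eval xs ` subs b" using IB3[of "ys @ za"] len za zb by simp
    show "set (drop m (srun (ia @ ib @ [(f, ra, rb)]) (xs @ ys))) \<subseteq> eval xs ` subs (Op f a b)"
      using run len s1 s2 by auto
  next
    fix ys :: "'a list" assume len: "length (xs @ ys) = m"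
      and nz: "\<forall>a' b'. Op GDiv a' b' \<in> subs (Op f a b) \<longrightarrow> eval xs b' \<noteq> 0"
    obtain za where za: "srun ia (xs @ ys) = xs @ ys @ za" "length za = length ia"
      using srun_ext[of ia "xs @ ys"] by auto
    obtain zb where zb: "srun ib (xs @ ys @ za) = xs @ ys @ za @ zb" "length zb = length ib"
      using srun_ext[of ib "xs @ ys @ za"] by auto
    have B: "(xs @ ys @ za @ zb) ! rb = eval xs b" using IB3[of "ys @ za"] len za zb by auto
    have r1: "rok ia (xs @ ys)" using IA len nz by auto
    have r2: "rok ib (xs @ ys @ za)" using IB3[of "ys @ za"] len za nz by auto
    show "rok (ia @ ib @ [(f, ra, rb)]) (xs @ ys)"
      using r1 r2 za zb B nz by (auto simp: rok_append srun_append)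
  qed
qed


lemma codes_props:
  fixes xs :: "'a::field list"
  assumes "\<forall>e\<in>set es. inps e \<subseteq> {..<length xs}" "length xs \<le> m"
  shows "wfins (fst (codes es m)) m \<and> (\<forall>r\<in>set (snd (codes es m)). r < m + length (fst (codes es m))) \<and>
    (\<forall>ys. length (xs @ ys) = m \<longrightarrow>
       map (\<lambda>r. srun (fst (codes es m)) (xs @ ys) ! r) (snd (codes es m)) = map (eval xs) es \<and>
       set (drop m (srun (fst (codes es m)) (xs @ ys))) \<subseteq> eval xs ` (\<Union>e\<in>set es. subs e) \<and>
       ((\<forall>e\<in>set es. \<forall>a b. Op GDiv a b \<in> subs e \<longrightarrow> eval xs b \<noteq> 0) \<longrightarrow> rok (fst (codes es m)) (xs @ ys)))"
  using assms
proof (induction es arbitrary: m)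
  case Nil
  then show ?case by auto
next
  case (Cons e es)
  obtain i1 r where c1: "code e m = (i1, r)" by fastforce
  obtain i2 rs where c2: "codes es (m + length i1) = (i2, rs)" by fastforce
  have E: "wfins i1 m \<and> r < m + length i1 \<and>
    (\<forall>ys. length (xs @ ys) = m \<longrightarrow>
       srun i1 (xs @ ys) ! r = eval xs e \<and>
       set (drop m (srun i1 (xs @ ys))) \<subseteq> eval xs ` subs e \<and>
       ((\<forall>a b. Op GDiv a b \<in> subs e \<longrightarrow> eval xs b \<noteq> 0) \<longrightarrow> rok i1 (xs @ ys)))"
    using code_props[of e xs m] Cons.prems c1 by auto
  have R: "wfins i2 (m + length i1) \<and> (\<forall>r\<in>set rs. r < m + length i1 + length i2) \<and>
    (\<forall>ys. length (xs @ ys) = m + length i1 \<longrightarrow>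
       map (\<lambda>r. srun i2 (xs @ ys) ! r) rs = map (eval xs) es \<and>
       set (drop (m + length i1) (srun i2 (xs @ ys))) \<subseteq> eval xs ` (\<Union>e\<in>set es. subs e) \<and>
       ((\<forall>e\<in>set es. \<forall>a b. Op GDiv a b \<in> subs e \<longrightarrow> eval xs b \<noteq> 0) \<longrightarrow> rok i2 (xs @ ys)))"
    using Cons.IH[of "m + length i1"] Cons.prems c2 by auto
  note E3 = E[THEN conjunct2, THEN conjunct2, rule_format]
  note R3 = R[THEN conjunct2, THEN conjunct2, rule_format]
  have c: "codes (e # es) m = (i1 @ i2, r # rs)" using c1 c2 by simp
  show ?case
  proof (simp only: c fst_conv snd_conv, intro conjI allI impI ballI)
    show "wfins (i1 @ i2) m" using E R by (simp add: wfins_append)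
  next
    fix x assume "x \<in> set (r # rs)"
    then show "x < m + length (i1 @ i2)" using E R by auto
  next
    fix ys :: "'a list" assume len: "length (xs @ ys) = m"
    obtain z1 where z1: "srun i1 (xs @ ys) = xs @ ys @ z1" "length z1 = length i1"
      using srun_ext[of i1 "xs @ ys"] by auto
    obtain z2 where z2: "srun i2 (xs @ ys @ z1) = xs @ ys @ z1 @ z2" "length z2 = length i2"
      using srun_ext[of i2 "xs @ ys @ z1"] by auto
    have run: "srun (i1 @ i2) (xs @ ys) = srun i2 (xs @ ys @ z1)" using z1 by (simp add: srun_append)
    have rr: "srun i2 (xs @ ys @ z1) ! r = eval xs e"
      using E3[of ys] len z1 E by (simp add: srun_nth)
    show "map (\<lambda>r. srun (i1 @ i2) (xs @ ys) ! r) (r # rs) = map (eval xs) (e # es)"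
      using rr R3[of "ys @ z1"] len z1 run by simp
    have s1: "set z1 \<subseteq> eval xs ` subs e" using E3[of ys] len z1 by simp
    have s2: "set z2 \<subseteq> eval xs ` (\<Union>e\<in>set es. subs e)" using R3[of "ys @ z1"] len z1 z2 by simp
    show "set (drop m (srun (i1 @ i2) (xs @ ys))) \<subseteq> eval xs ` (\<Union>e\<in>set (e # es). subs e)"
      using run z2 len s1 s2 by (auto simp: image_Un)
  next
    fix ys :: "'a list" assume len: "length (xs @ ys) = m"
      and nz: "\<forall>e\<in>set (e # es). \<forall>a b. Op GDiv a b \<in> subs e \<longrightarrow> eval xs b \<noteq> 0"
    obtain z1 where z1: "srun i1 (xs @ ys) = xs @ ys @ z1" "length z1 = length i1"
      using srun_ext[of i1 "xs @ ys"] by auto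
    show "rok (i1 @ i2) (xs @ ys)" using E3[of ys] R3[of "ys @ z1"] len z1 nz
      by (simp add: rok_append)
  qed
qed

lemma finite_vals: "finite (gj_sym_vals P vs)"
  by (induction P vs rule: gj_sym_vals.induct) (auto simp: Let_def)

lemma finite_preds: "finite (gj_sym_preds P vs)"
  by (induction P vs rule: gj_sym_preds.induct) (auto simp: Let_def)


lemma mon_deg_sum: "finite K \<Longrightarrow> Poly_Mapping.keys m \<subseteq> K \<Longrightarrow> mon_deg m = (\<Sum>i\<in>K. Poly_Mapping.lookup m i)"
  unfolding mon_deg_def
  by (rule sum.mono_neutral_left) (auto simp: in_keys_iff)

lemma mon_deg_add: "mon_deg (a + b) = mon_deg a + mon_deg b"
proof -
  let ?K = "Poly_Mapping.keys a \<union> Poly_Mapping.keys b"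
  have "mon_deg (a + b) = (\<Sum>i\<in>?K. Poly_Mapping.lookup (a + b) i)"
    by (rule mon_deg_sum) (use keys_add[of a b] in auto)
  also have "\<dots> = (\<Sum>i\<in>?K. Poly_Mapping.lookup a i) + (\<Sum>i\<in>?K. Poly_Mapping.lookup b i)"
    by (simp add: lookup_add sum.distrib)
  also have "\<dots> = mon_deg a + mon_deg b"
    using mon_deg_sum[of ?K a] mon_deg_sum[of ?K b] by simp
  finally show ?thesis .
qed

lemma mpoly_deg_le: "mpoly_deg p \<le> D \<longleftrightarrow> (\<forall>m\<in>Poly_Mapping.keys p. mon_deg m \<le> D)"
  unfolding mpoly_deg_def by auto

lemma mpoly_deg_ge: "m \<in> Poly_Mapping.keys p \<Longrightarrow> mon_deg m \<le> mpoly_deg p"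
  using mpoly_deg_le by blast

lemma mpoly_deg_add: "mpoly_deg (p + q) \<le> max (mpoly_deg p) (mpoly_deg q)"
  unfolding mpoly_deg_le
  using keys_add[of p q] mpoly_deg_ge[of _ p] mpoly_deg_ge[of _ q] by fastforce

lemma mpoly_deg_diff: "mpoly_deg (p - q) \<le> max (mpoly_deg p) (mpoly_deg q)"
  unfolding mpoly_deg_le
  using keys_diff[of p q] mpoly_deg_ge[of _ p] mpoly_deg_ge[of _ q] by fastforce

lemma mpoly_deg_mult: "mpoly_deg (p * q) \<le> mpoly_deg p + mpoly_deg q"
  unfolding mpoly_deg_le
proof
  fix m assume "m \<in> Poly_Mapping.keys (p * q)"
  then obtain a b where "m = a + b" "a \<in> Poly_Mapping.keys p" "b \<in> Poly_Mapping.keys q"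
    using keys_mult[of p q] by blast
  then show "mon_deg m \<le> mpoly_deg p + mpoly_deg q"
    using mpoly_deg_ge[of a p] mpoly_deg_ge[of b q] by (simp add: mon_deg_add)
qed

lemma mpoly_deg_one: "mpoly_deg 1 = 0"
  unfolding mpoly_deg_def mon_deg_def by simp

lemma mpoly_deg_var: "mpoly_deg (mpoly_var i) \<le> 1"
  unfolding mpoly_deg_le mpoly_var_def mon_deg_def by simp

lemma ratfun_deg_le: "q \<noteq> 0 \<Longrightarrow> ratfun_deg (Fract p q) \<le> max (mpoly_deg p) (mpoly_deg q)"
  unfolding ratfun_deg_def by (rule Least_le) blast

lemma ratfun_deg_poly: "ratfun_deg (Fract p 1) \<le> mpoly_deg p"
  using ratfun_deg_le[of 1 p] by (simp add: mpoly_deg_one)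

lemma ratfun_deg_div: "ratfun_deg (Fract p 1 / Fract q 1) \<le> max (mpoly_deg p) (mpoly_deg q)"
proof (cases "q = 0")
  case True
  have "Fract p 1 / Fract q 1 = Fract 0 1" using True by (simp add: Zero_fract_def[symmetric])
  then show ?thesis using ratfun_deg_poly[of 0] by (simp add: mpoly_deg_def)
next
  case False
  then show ?thesis using ratfun_deg_le[of q p] by simp
qed


fun sdeg :: "expr \<Rightarrow> nat" where
  "sdeg (Inp i) = 1"
| "sdeg (Op f a b) = (if f = GMul then sdeg a + sdeg b else max (sdeg a) (sdeg b))"

fun divfree :: "expr \<Rightarrow> bool" where
  "divfree (Inp i) = True"
| "divfree (Op f a b) = (f \<noteq> GDiv \<and> divfree a \<and> divfree b)"

lemma inputs_nth: "i < n \<Longrightarrow> gj_inputs n ! i = Fract (mpoly_var i) 1"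
  unfolding gj_inputs_def by simp

lemma divfree_poly:
  assumes "divfree e" "inps e \<subseteq> {..<n}"
  shows "\<exists>p. eval (gj_inputs n) e = Fract p 1 \<and> mpoly_deg p \<le> sdeg e"
  using assms
proof (induction e)
  case (Inp i)
  then show ?case using mpoly_deg_var[of i] by (auto simp: inputs_nth)
next
  case (Op f a b)
  then obtain p q where p: "eval (gj_inputs n) a = Fract p 1" "mpoly_deg p \<le> sdeg a"
    and q: "eval (gj_inputs n) b = Fract q 1" "mpoly_deg q \<le> sdeg b" by auto
  show ?case
  proof (cases f)
    case GAdd
    then show ?thesis using p q mpoly_deg_add[of p q] by (intro exI[of _ "p + q"]) auto
  next
    case GSub
    then show ?thesis using p q mpoly_deg_diff[of p q] by (intro exI[of _ "p - q"]) auto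
  next
    case GMul
    then show ?thesis using p q mpoly_deg_mult[of p q] by (intro exI[of _ "p * q"]) auto
  next
    case GDiv
    then show ?thesis using Op.prems by simp
  qed
qed

lemma subs_mono: "e' \<in> subs e \<Longrightarrow> sdeg e' \<le> sdeg e \<and> (divfree e \<longrightarrow> divfree e') \<and> inps e' \<subseteq> inps e"
  by (induction e) auto

definition dgood :: "nat \<Rightarrow> expr \<Rightarrow> bool" where
  "dgood B e \<longleftrightarrow> (divfree e \<and> sdeg e \<le> B) \<or>
     (\<exists>a b. e = Op GDiv a b \<and> divfree a \<and> divfree b \<and> sdeg a \<le> B \<and> sdeg b \<le> B)"

lemma dgood_deg:
  assumes "dgood B e" "inps e \<subseteq> {..<n}" "e' \<in> subs e"
  shows "ratfun_deg (eval (gj_inputs n) e') \<le> B"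
proof -
  have df: "ratfun_deg (eval (gj_inputs n) e') \<le> B" if h: "divfree e'" "sdeg e' \<le> B" "inps e' \<subseteq> {..<n}" for e'
  proof -
    obtain p where "eval (gj_inputs n) e' = Fract p 1" "mpoly_deg p \<le> sdeg e'"
      using divfree_poly[OF h(1,3)] by blast
    then show ?thesis using ratfun_deg_poly[of p] h(2) by simp
  qed
  show ?thesis
  proof (cases "divfree e \<and> sdeg e \<le> B")
    case True
    then show ?thesis using subs_mono[OF assms(3)] assms(2) df by auto
  next
    case False
    then obtain a b where e: "e = Op GDiv a b" "divfree a" "divfree b" "sdeg a \<le> B" "sdeg b \<le> B"
      using assms(1) unfolding dgood_def by blast
    show ?thesis
    proof (cases "e' = e")
      case True
      obtain p where p: "eval (gj_inputs n) a = Fract p 1" "mpoly_deg p \<le> sdeg a"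
        using divfree_poly[OF e(2), of n] assms(2) e(1) by auto
      obtain q where q: "eval (gj_inputs n) b = Fract q 1" "mpoly_deg q \<le> sdeg b"
        using divfree_poly[OF e(3), of n] assms(2) e(1) by auto
      show ?thesis using True e p q ratfun_deg_div[of p q] by simp
    next
      case False
      then have "e' \<in> subs a \<or> e' \<in> subs b" using assms(3) e(1) by auto
      then show ?thesis using subs_mono[of e' a] subs_mono[of e' b] e assms(2) df by auto
    qed
  qed
qed


definition zeroE :: expr where "zeroE = Op GSub (Inp 0) (Inp 0)"

fun sumE :: "expr list \<Rightarrow> expr" where
  "sumE [] = zeroE" | "sumE (e # es) = Op GAdd e (sumE es)"

fun ssum :: "(bool \<times> expr) list \<Rightarrow> expr" where
  "ssum [] = zeroE"
| "ssum ((s, e) # r) = (if s then Op GAdd (ssum r) e else Op GSub (ssum r) e)"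

definition del :: "nat \<Rightarrow> 'a list \<Rightarrow> 'a list" where "del j xs = take j xs @ drop (Suc j) xs"

fun detE :: "(nat \<Rightarrow> nat \<Rightarrow> expr) \<Rightarrow> nat list \<Rightarrow> nat list \<Rightarrow> expr" where
  "detE M [] cs = zeroE"
| "detE M [r] cs = M r (hd cs)"
| "detE M (r # r' # rs) cs = ssum (map (\<lambda>j. (even j, Op GMul (M r (cs ! j)) (detE M (r' # rs) (del j cs)))) [0..<length cs])"

fun ldet :: "(nat \<Rightarrow> nat \<Rightarrow> 'a::comm_ring_1) \<Rightarrow> nat list \<Rightarrow> nat list \<Rightarrow> 'a" where
  "ldet f [] cs = 1"
| "ldet f (r # rs) cs = (\<Sum>j<length cs. (-1) ^ j * f r (cs ! j) * ldet f rs (del j cs))"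

lemma length_del[simp]: "j < length xs \<Longrightarrow> length (del j xs) = length xs - 1"
  unfolding del_def by simp

lemma set_del: "set (del j xs) \<subseteq> set xs"
  unfolding del_def using set_take_subset set_drop_subset by fastforce

lemma nth_del: "j < length xs \<Longrightarrow> i < length xs - 1 \<Longrightarrow> del j xs ! i = xs ! (if i < j then i else Suc i)"
  unfolding del_def by (auto simp: nth_append min_def)

lemma eval_zeroE[simp]: "eval xs zeroE = 0"
  unfolding zeroE_def by simp

lemma eval_sumE: "eval xs (sumE es) = sum_list (map (eval xs) es)"
  by (induction es) auto

lemma eval_ssum: "eval xs (ssum l) = sum_list (map (\<lambda>(s, e). if s then eval xs e else - eval xs e) l)"
  by (induction l rule: ssum.induct) auto

lemma eval_detE:
  "rs \<noteq> [] \<Longrightarrow> length cs = length rs \<Longrightarrow> eval xs (detE M rs cs) = ldet (\<lambda>a b. eval xs (M a b)) rs cs"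
proof (induction M rs cs rule: detE.induct)
  case (2 M r cs)
  then obtain c where "cs = [c]" by (cases cs) auto
  then show ?case by simp
next
  case (3 M r r' rs cs)
  have "eval xs (detE M (r # r' # rs) cs) =
      sum_list (map (\<lambda>j. (-1) ^ j * eval xs (M r (cs ! j)) * ldet (\<lambda>a b. eval xs (M a b)) (r' # rs) (del j cs)) [0..<length cs])"
    unfolding detE.simps eval_ssum map_map
    by (rule arg_cong[where f = sum_list], rule map_cong, simp)
      (use 3 in \<open>auto simp: length_del\<close>)
  also have "\<dots> = ldet (\<lambda>a b. eval xs (M a b)) (r # r' # rs) cs"
    by (simp add: interv_sum_list_conv_sum_set_nat lessThan_atLeast0)
  finally show ?case .
qed auto

lemma sdeg_zeroE[simp]: "sdeg zeroE = 1"
  unfolding zeroE_def by simp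

lemma divfree_zeroE[simp]: "divfree zeroE"
  unfolding zeroE_def by simp

lemma inps_zeroE[simp]: "inps zeroE = {0}"
  unfolding zeroE_def by simp

lemma sumE_props: "\<forall>e\<in>set es. sdeg e \<le> B \<and> divfree e \<Longrightarrow> 1 \<le> B \<Longrightarrow>
    sdeg (sumE es) \<le> B \<and> divfree (sumE es) \<and> inps (sumE es) \<subseteq> insert 0 (\<Union>e\<in>set es. inps e)"
  by (induction es) auto

lemma ssum_props: "\<forall>(s, e)\<in>set l. sdeg e \<le> B \<and> divfree e \<Longrightarrow> 1 \<le> B \<Longrightarrow>
    sdeg (ssum l) \<le> B \<and> divfree (ssum l) \<and> inps (ssum l) \<subseteq> insert 0 (\<Union>(s, e)\<in>set l. inps e)"
  by (induction l rule: ssum.induct) auto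

lemma detE_props:
  assumes "\<forall>a b. sdeg (M a b) \<le> c \<and> divfree (M a b)" "1 \<le> c" "rs \<noteq> []" "length cs = length rs"
  shows "sdeg (detE M rs cs) \<le> c * length rs \<and> divfree (detE M rs cs) \<and>
     inps (detE M rs cs) \<subseteq> insert 0 (\<Union>a\<in>set rs. \<Union>b\<in>set cs. inps (M a b))"
  using assms(1,3,4)
proof (induction M rs cs rule: detE.induct)
  case (2 M r cs)
  then obtain c' where "cs = [c']" by (cases cs) auto
  then show ?case using 2 by auto
next
  case (3 M r r' rs cs)
  let ?l = "map (\<lambda>j. (even j, Op GMul (M r (cs ! j)) (detE M (r' # rs) (del j cs)))) [0..<length cs]"
  have IH: "sdeg (detE M (r' # rs) (del j cs)) \<le> c * length (r' # rs) \<and> divfree (detE M (r' # rs) (del j cs)) \<and>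
     inps (detE M (r' # rs) (del j cs)) \<subseteq> insert 0 (\<Union>a\<in>set (r' # rs). \<Union>b\<in>set (del j cs). inps (M a b))"
    if "j < length cs" for j
    by (rule "3.IH"[of j]) (use "3.prems" that in \<open>auto simp: length_del\<close>)
  have el: "\<forall>(s, e)\<in>set ?l. sdeg e \<le> c * length (r # r' # rs) \<and> divfree e"
  proof safe
    fix s e assume "(s, e) \<in> set ?l"
    then obtain j where j: "j < length cs" "e = Op GMul (M r (cs ! j)) (detE M (r' # rs) (del j cs))" by auto
    show "sdeg e \<le> c * length (r # r' # rs)" using j IH[OF j(1)] "3.prems"(1)[rule_format, of r "cs ! j"]
      by simp
    show "divfree e" using j IH[OF j(1)] "3.prems"(1) by simp
  qed
  have "c \<le> c * length (r # r' # rs)" using assms(2) by simp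
  then have "1 \<le> c * length (r # r' # rs)" using assms(2) by linarith
  from ssum_props[OF el this]
  have S: "sdeg (ssum ?l) \<le> c * length (r # r' # rs) \<and> divfree (ssum ?l) \<and> inps (ssum ?l) \<subseteq> insert 0 (\<Union>(s, e)\<in>set ?l. inps e)" .
  have T: "(\<Union>(s, e)\<in>set ?l. inps e) \<subseteq> insert 0 (\<Union>a\<in>set (r # r' # rs). \<Union>b\<in>set cs. inps (M a b))"
  proof safe
    fix x s e assume "(s, e) \<in> set ?l" "x \<in> inps e" "x \<notin> (\<Union>a\<in>set (r # r' # rs). \<Union>b\<in>set cs. inps (M a b))"
    then obtain j where j: "j < length cs" "e = Op GMul (M r (cs ! j)) (detE M (r' # rs) (del j cs))" "x \<in> inps e" by auto
    then show "x = 0" using IH[OF j(1)] set_del[of j cs] \<open>x \<notin> _\<close> by fastforce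
  qed
  have I: "inps (ssum ?l) \<subseteq> insert 0 (\<Union>a\<in>set (r # r' # rs). \<Union>b\<in>set cs. inps (M a b))"
    using S T by blast
  show ?case unfolding detE.simps using S I by blast
qed auto


lemma det_mat0: "det (mat 0 0 g :: 'a::comm_ring_1 mat) = 1"
  unfolding det_def by simp

lemma ldet_det:
  fixes f :: "nat \<Rightarrow> nat \<Rightarrow> 'a::comm_ring_1"
  shows "length cs = length rs \<Longrightarrow> ldet f rs cs = det (mat (length rs) (length rs) (\<lambda>(x, y). f (rs ! x) (cs ! y)))"
proof (induction rs arbitrary: cs)
  case Nil
  then show ?case by (simp add: det_mat0)
next
  case (Cons r rs)
  let ?n = "length (r # rs)"
  let ?A = "mat ?n ?n (\<lambda>(x, y). f ((r # rs) ! x) (cs ! y))"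
  have A: "?A \<in> carrier_mat ?n ?n" by simp
  have del: "mat_delete ?A 0 j = mat (length rs) (length rs) (\<lambda>(x, y). f (rs ! x) (del j cs ! y))" if j: "j < length cs" for j
    by (rule eq_matI) (use j Cons.prems in \<open>auto simp: mat_delete_def nth_del\<close>)
  have "det ?A = (\<Sum>j<?n. ?A $$ (0, j) * cofactor ?A 0 j)"
    by (rule laplace_expansion_row[OF A]) simp
  also have "\<dots> = (\<Sum>j<length cs. (-1) ^ j * f r (cs ! j) * ldet f rs (del j cs))"
  proof (rule sum.cong)
    show "{..<?n} = {..<length cs}" using Cons.prems by simp
  next
    fix j assume "j \<in> {..<length cs}"
    then have j: "j < length cs" by simp
    have "ldet f rs (del j cs) = det (mat_delete ?A 0 j)"
      using Cons.IH[of "del j cs"] j Cons.prems del[OF j] by simp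
    then show "?A $$ (0, j) * cofactor ?A 0 j = (-1) ^ j * f r (cs ! j) * ldet f rs (del j cs)"
      using j Cons.prems by (simp add: cofactor_def)
  qed
  finally show ?case by simp
qed


lemma massoc: "dim_col A = dim_row B \<Longrightarrow> dim_col B = dim_row C \<Longrightarrow> (A * B) * C = A * (B * (C :: 'a::comm_semiring_0 mat))"
  by (rule assoc_mult_mat[of A "dim_row A" "dim_col A" B "dim_col B" C "dim_col C"]) auto

lemma tmult: "dim_col A = dim_row B \<Longrightarrow> transpose_mat (A * B) = transpose_mat B * transpose_mat (A :: 'a::comm_semiring_0 mat)"
  by (rule transpose_mult[of A "dim_row A" "dim_col A" B "dim_col B"]) auto

definition penrose :: "real mat \<Rightarrow> real mat \<Rightarrow> bool" where
  "penrose Z X \<longleftrightarrow> X \<in> carrier_mat (dim_col Z) (dim_row Z) \<and>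
      Z * X * Z = Z \<and> X * Z * X = X \<and>
      transpose_mat (Z * X) = Z * X \<and> transpose_mat (X * Z) = X * Z"

lemma penrose_unique:
  assumes Z: "Z \<in> carrier_mat k d" and p1: "penrose Z X1" and p2: "penrose Z X2"
  shows "X1 = X2"
proof -
  have X1: "X1 \<in> carrier_mat d k" and X2: "X2 \<in> carrier_mat d k"
    using p1 p2 Z unfolding penrose_def by auto
  note P1 = p1[unfolded penrose_def] and P2 = p2[unfolded penrose_def]
  have a: "X1 * Z = X2 * Z"
  proof -
    have e1: "X1 * Z = (X1 * Z) * (X2 * Z)"
    proof -
      have "X1 * Z = X1 * (Z * X2 * Z)" using P2 by simp
      also have "\<dots> = (X1 * Z) * (X2 * Z)" using X1 X2 Z by (simp add: massoc carrier_matD)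
      finally show ?thesis .
    qed
    have e2: "X2 * Z = (X2 * Z) * (X1 * Z)"
    proof -
      have "X2 * Z = X2 * (Z * X1 * Z)" using P1 by simp
      also have "\<dots> = (X2 * Z) * (X1 * Z)" using X1 X2 Z by (simp add: massoc carrier_matD)
      finally show ?thesis .
    qed
    have "X1 * Z = transpose_mat (X1 * Z)" using P1 by simp
    also have "\<dots> = transpose_mat (X2 * Z) * transpose_mat (X1 * Z)"
      using X1 X2 Z by (subst e1) (simp add: tmult carrier_matD)
    also have "\<dots> = (X2 * Z) * (X1 * Z)" using P1 P2 by simp
    also have "\<dots> = X2 * Z" using e2 by simp
    finally show ?thesis .
  qed
  have b: "Z * X1 = Z * X2"
  proof -
    have e1: "Z * X1 = (Z * X2) * (Z * X1)"
    proof -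
      have "Z * X1 = (Z * X2 * Z) * X1" using P2 by simp
      also have "\<dots> = (Z * X2) * (Z * X1)" using X1 X2 Z by (simp add: massoc carrier_matD)
      finally show ?thesis .
    qed
    have e2: "Z * X2 = (Z * X1) * (Z * X2)"
    proof -
      have "Z * X2 = (Z * X1 * Z) * X2" using P1 by simp
      also have "\<dots> = (Z * X1) * (Z * X2)" using X1 X2 Z by (simp add: massoc carrier_matD)
      finally show ?thesis .
    qed
    have "Z * X1 = transpose_mat (Z * X1)" using P1 by simp
    also have "\<dots> = transpose_mat (Z * X1) * transpose_mat (Z * X2)"
      using X1 X2 Z by (subst e1) (simp add: tmult carrier_matD)
    also have "\<dots> = (Z * X1) * (Z * X2)" using P1 P2 by simp
    also have "\<dots> = Z * X2" using e2 by simp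
    finally show ?thesis by simp
  qed
  have "X1 = X1 * Z * X1" using P1 by simp
  also have "\<dots> = X2 * Z * X1" using a by simp
  also have "\<dots> = X2 * (Z * X1)" using X1 X2 Z by (simp add: massoc carrier_matD)
  also have "\<dots> = X2 * (Z * X2)" using b by simp
  also have "\<dots> = X2 * Z * X2" using X1 X2 Z by (simp add: massoc carrier_matD)
  also have "\<dots> = X2" using P2 by simp
  finally show ?thesis .
qed

lemma pinv_eq:
  assumes Z: "Z \<in> carrier_mat k d" and p: "penrose Z X"
  shows "pinv Z = X"
proof -
  have "pinv Z = (THE X. penrose Z X)"
    unfolding pinv_def penrose_def by simp
  also have "\<dots> = X"
  proof (rule the_equality)
    show "penrose Z X" by (rule p)
  next
    fix Y assume "penrose Z Y"
    then show "Y = X" using penrose_unique[OF Z _ p] by blast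
  qed
  finally show ?thesis .
qed

definition minv :: "real mat \<Rightarrow> real mat" where
  "minv M = (1 / det M) \<cdot>\<^sub>m adj_mat M"

lemma minv:
  assumes M: "M \<in> carrier_mat n n" and d: "det M \<noteq> 0"
  shows "minv M \<in> carrier_mat n n" "M * minv M = 1\<^sub>m n" "minv M * M = 1\<^sub>m n"
proof -
  note adj = adj_mat[OF M]
  show "minv M \<in> carrier_mat n n" unfolding minv_def using adj by simp
  have "M * minv M = (1 / det M) \<cdot>\<^sub>m (M * adj_mat M)"
    unfolding minv_def by (rule mult_smult_distrib[OF M adj(1)])
  also have "\<dots> = 1\<^sub>m n" unfolding adj(2) using d by (intro eq_matI) auto
  finally show "M * minv M = 1\<^sub>m n" .
  have "minv M * M = (1 / det M) \<cdot>\<^sub>m (adj_mat M * M)"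
    unfolding minv_def by (rule mult_smult_assoc_mat[OF adj(1) M])
  also have "\<dots> = 1\<^sub>m n" unfolding adj(3) using d by (intro eq_matI) auto
  finally show "minv M * M = 1\<^sub>m n" .
qed

lemma minv_sym:
  assumes M: "M \<in> carrier_mat n n" and d: "det M \<noteq> 0" and s: "transpose_mat M = M"
  shows "transpose_mat (minv M) = minv M"
proof -
  note I = minv[OF M d]
  have l: "transpose_mat (minv M) * M = 1\<^sub>m n"
  proof -
    have "transpose_mat (minv M) * M = transpose_mat (minv M) * transpose_mat M" using s by simp
    also have "\<dots> = transpose_mat (M * minv M)" by (rule tmult[symmetric]) (use M I in \<open>simp add: carrier_matD\<close>)
    also have "\<dots> = 1\<^sub>m n" using I by simp
    finally show ?thesis .
  qed
  have "transpose_mat (minv M) = transpose_mat (minv M) * (M * minv M)" using I by simp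
  also have "\<dots> = (transpose_mat (minv M) * M) * minv M" using I M by (simp add: massoc carrier_matD)
  also have "\<dots> = minv M" using l I by simp
  finally show ?thesis .
qed

lemma sprod_self_zero:
  fixes v :: "real vec"
  assumes "v \<in> carrier_vec n" "v \<bullet> v = 0"
  shows "v = 0\<^sub>v n"
proof -
  have "(\<Sum>i\<in>{0..<n}. v $ i * v $ i) = 0" using assms unfolding scalar_prod_def by simp
  then have "\<forall>i\<in>{0..<n}. v $ i * v $ i = 0"
    by (subst (asm) sum_nonneg_eq_0_iff) auto
  then show ?thesis using assms by (intro eq_vecI) auto
qed


lemma penrose_construct:
  fixes Z A W E :: "real mat"
  assumes Z: "Z \<in> carrier_mat k d" and A: "A \<in> carrier_mat s d" and W: "W \<in> carrier_mat k s"
    and E: "E \<in> carrier_mat s k" and ZW: "Z = W * A" and AE: "A = E * Z"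
    and dG: "det (A * transpose_mat A) \<noteq> 0"
  shows "pinv Z * Z = transpose_mat A * (minv (A * transpose_mat A) * A)"
proof -
  define G where "G = A * transpose_mat A"
  define Gi where "Gi = minv G"
  define H where "H = transpose_mat W * W"
  define Hi where "Hi = minv H"
  have d0: "dim_row A = s" "dim_col A = d" "dim_row W = k" "dim_col W = s" "dim_row E = s" "dim_col E = k"
    "dim_row Z = k" "dim_col Z = d"
    using A W E Z by auto
  have G: "G \<in> carrier_mat s s" using A by (simp add: G_def)
  have GT: "transpose_mat G = G" using A unfolding G_def by (simp add: tmult carrier_matD)
  have dG': "det G \<noteq> 0" using dG G_def by simp
  note GI = minv[OF G dG', folded Gi_def]
  have GiT: "transpose_mat Gi = Gi" unfolding Gi_def by (rule minv_sym[OF G dG' GT])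
  have EWA: "(E * W) * A = A"
  proof -
    have "(E * W) * A = E * (W * A)" by (rule massoc) (simp_all add: d0)
    also have "\<dots> = A" using ZW AE by simp
    finally show ?thesis .
  qed
  have EWG: "(E * W) * G = G"
  proof -
    have "(E * W) * G = ((E * W) * A) * transpose_mat A" unfolding G_def
      by (rule massoc[symmetric]) (simp_all add: d0)
    then show ?thesis using EWA G_def by simp
  qed
  have EW: "E * W = 1\<^sub>m s"
  proof -
    have "E * W = (E * W) * (G * Gi)" using GI E W by simp
    also have "\<dots> = ((E * W) * G) * Gi" 
      by (rule massoc[symmetric]) (use d0 G GI in simp_all)
    also have "\<dots> = 1\<^sub>m s" using EWG GI by simp
    finally show ?thesis .
  qed
  have H: "H \<in> carrier_mat s s" using W by (simp add: H_def)
  have HT: "transpose_mat H = H" using W unfolding H_def by (simp add: tmult carrier_matD)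
  have dH: "det H \<noteq> 0"
  proof
    assume "det H = 0"
    then obtain v where v: "v \<in> carrier_vec s" "v \<noteq> 0\<^sub>v s" "H *\<^sub>v v = 0\<^sub>v s"
      using det_0_iff_vec_prod_zero_field[OF H] by blast
    have Wv: "W *\<^sub>v v \<in> carrier_vec k" using W v by simp
    have "(W *\<^sub>v v) \<bullet> (W *\<^sub>v v) = (transpose_mat W *\<^sub>v (W *\<^sub>v v)) \<bullet> v"
      using transpose_vec_mult_scalar[OF W v(1) Wv] by simp
    also have "transpose_mat W *\<^sub>v (W *\<^sub>v v) = H *\<^sub>v v"
      unfolding H_def by (rule assoc_mult_mat_vec[symmetric]) (use W v in auto)
    also have "\<dots> \<bullet> v = 0" using v by simp
    finally have "W *\<^sub>v v = 0\<^sub>v k" using sprod_self_zero[OF Wv] by blast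
    then have "E *\<^sub>v (W *\<^sub>v v) = 0\<^sub>v s" using E by (intro eq_vecI) (auto simp: scalar_prod_def)
    moreover have "E *\<^sub>v (W *\<^sub>v v) = v"
    proof -
      have "E *\<^sub>v (W *\<^sub>v v) = (E * W) *\<^sub>v v" by (rule assoc_mult_mat_vec[symmetric]) (use E W v in auto)
      then show ?thesis using EW v by simp
    qed
    ultimately show False using v by simp
  qed
  note HI = minv[OF H dH, folded Hi_def]
  have HiT: "transpose_mat Hi = Hi" unfolding Hi_def by (rule minv_sym[OF H dH HT])
  have c1: "A * (transpose_mat A * (Gi * R)) = R" if "dim_row R = s" for R
  proof -
    have "A * (transpose_mat A * (Gi * R)) = (G * Gi) * R" unfolding G_def
      using A GI that by (simp add: massoc carrier_matD)
    then show ?thesis using GI that by simp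
  qed
  have c2: "Hi * (transpose_mat W * (W * R)) = R" if "dim_row R = s" for R
  proof -
    have "Hi * (transpose_mat W * (W * R)) = (Hi * H) * R" unfolding H_def
      using W HI that by (simp add: massoc carrier_matD)
    then show ?thesis using HI that by simp
  qed
  define X where "X = transpose_mat A * (Gi * (Hi * transpose_mat W))"
  have dims: "dim_row A = s" "dim_col A = d" "dim_row W = k" "dim_col W = s"
    "dim_row Gi = s" "dim_col Gi = s" "dim_row Hi = s" "dim_col Hi = s"
    using A W GI HI by auto
  have XZ: "X * Z = transpose_mat A * (Gi * A)"
    unfolding X_def ZW using dims by (simp add: massoc c2)
  have ZX: "Z * X = W * (Hi * transpose_mat W)"
    unfolding X_def ZW using dims by (simp add: massoc c1)
  have p: "penrose Z X"
    unfolding penrose_def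
  proof (intro conjI)
    show "X \<in> carrier_mat (dim_col Z) (dim_row Z)" unfolding X_def using Z dims by auto
    show "Z * X * Z = Z" unfolding ZX unfolding ZW using dims by (simp add: massoc c2)
    show "X * Z * X = X" unfolding XZ unfolding X_def using dims by (simp add: massoc c1 c2)
    show "transpose_mat (Z * X) = Z * X" unfolding ZX using dims by (simp add: tmult massoc HiT)
    show "transpose_mat (X * Z) = X * Z" unfolding XZ using dims by (simp add: tmult massoc GiT)
  qed
  have "pinv Z = X" by (rule pinv_eq[OF Z p])
  then show ?thesis using XZ G_def Gi_def by simp
qed


lemma gram_kernel:
  fixes Z :: "real mat"
  assumes Z: "Z \<in> carrier_mat k d" and v: "v \<in> carrier_vec k" and Gv: "(Z * transpose_mat Z) *\<^sub>v v = 0\<^sub>v k"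
  shows "transpose_mat Z *\<^sub>v v = 0\<^sub>v d"
proof -
  have ZT: "transpose_mat Z \<in> carrier_mat d k" using Z by simp
  have w: "transpose_mat Z *\<^sub>v v \<in> carrier_vec d" using Z v by simp
  have "(transpose_mat Z *\<^sub>v v) \<bullet> (transpose_mat Z *\<^sub>v v) = (transpose_mat (transpose_mat Z) *\<^sub>v (transpose_mat Z *\<^sub>v v)) \<bullet> v"
    using transpose_vec_mult_scalar[OF ZT v w] by simp
  also have "transpose_mat (transpose_mat Z) *\<^sub>v (transpose_mat Z *\<^sub>v v) = (Z * transpose_mat Z) *\<^sub>v v"
    by (simp, rule assoc_mult_mat_vec[symmetric]) (use Z v in auto)
  also have "\<dots> \<bullet> v = 0" using Gv v by simp
  finally show ?thesis using sprod_self_zero[OF w] by blast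
qed

lemma fullrank_det:
  fixes Z :: "real mat"
  assumes Z: "Z \<in> carrier_mat k d" and r: "vec_space.rank k Z = k"
  shows "det (Z * transpose_mat Z) \<noteq> 0"
proof
  interpret vec_space "TYPE(real)" k .
  assume "det (Z * transpose_mat Z) = 0"
  then obtain v where v: "v \<in> carrier_vec k" "v \<noteq> 0\<^sub>v k" "(Z * transpose_mat Z) *\<^sub>v v = 0\<^sub>v k"
    using det_0_iff_vec_prod_zero_field[of "Z * transpose_mat Z" k] Z by auto
  have Zv: "transpose_mat Z *\<^sub>v v = 0\<^sub>v d" by (rule gram_kernel[OF Z v(1) v(3)])
  have colv: "c \<bullet> v = 0" if cZ: "c \<in> set (cols Z)" for c
  proof -
    obtain j where j: "j < d" "c = col Z j" using cZ Z by (auto simp: cols_def)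
    have "(transpose_mat Z *\<^sub>v v) $ j = c \<bullet> v" using j Z by simp
    then show ?thesis using Zv j by simp
  qed
  have colsC: "set (cols Z) \<subseteq> carrier_vec k" using Z cols_dim by blast
  have li0: "lin_indpt {}" unfolding lin_dep_def by auto
  obtain S where S: "finite S" "maximal S (\<lambda>T. T \<subseteq> set (cols Z) \<and> lin_indpt T)" "{} \<subseteq> S"
    using maximal_exists_superset[of "set (cols Z)" "(\<lambda>T. T \<subseteq> set (cols Z) \<and> lin_indpt T)" "{}"]
    using maximal_exists_superset[of "set (cols Z)" "(\<lambda>T. T \<subseteq> set (cols Z) \<and> lin_indpt T)" "{}"] li0 by blast
  have cardS: "card S = k" using rank_card_indpt[OF Z S(2)] r by simp
  have SC: "S \<subseteq> set (cols Z)" "lin_indpt S" using S(2) unfolding maximal_def by auto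
  have SC2: "S \<subseteq> carrier_vec k" using SC colsC by blast
  have "basis S"
    by (rule dim_li_is_basis[OF fin_dim S(1) _ SC(2)]) (use SC2 dim_is_n cardS in auto)
  then have spanS: "span S = carrier_vec k" unfolding basis_def by auto
  then have "v \<in> span S" using v by simp
  then obtain a where va: "v = lincomb a S" using finite_span[OF S(1)] SC colsC by auto
  have "v \<bullet> v = lincomb a S \<bullet> v" using va by simp
  also have "\<dots> = (\<Sum>i\<in>{0..<k}. lincomb a S $ i * v $ i)" unfolding scalar_prod_def using v(1) by simp
  also have "\<dots> = (\<Sum>i\<in>{0..<k}. (\<Sum>x\<in>S. a x * x $ i) * v $ i)"
    by (rule sum.cong) (simp_all add: lincomb_index SC2)
  also have "\<dots> = (\<Sum>i\<in>{0..<k}. \<Sum>x\<in>S. a x * (x $ i * v $ i))" by (simp add: sum_distrib_right mult.assoc)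
  also have "\<dots> = (\<Sum>x\<in>S. \<Sum>i\<in>{0..<k}. a x * (x $ i * v $ i))" by (rule sum.swap)
  also have "\<dots> = (\<Sum>x\<in>S. a x * (x \<bullet> v))"
    by (rule sum.cong) (use SC2 v(1) in \<open>auto simp: scalar_prod_def sum_distrib_left\<close>)
  also have "\<dots> = 0" by (rule sum.neutral) (use colv SC in auto)
  finally have "v = 0\<^sub>v k" using sprod_self_zero[OF v(1)] by blast
  then show False using v(2) by simp
qed


definition subm :: "real mat \<Rightarrow> nat list \<Rightarrow> real mat" where
  "subm Z S = mat (length S) (dim_col Z) (\<lambda>(a, j). Z $$ (S ! a, j))"

definition inrow :: "real mat \<Rightarrow> nat list \<Rightarrow> nat \<Rightarrow> bool" where
  "inrow Z S r \<longleftrightarrow> (\<exists>c. \<forall>j<dim_col Z. Z $$ (r, j) = (\<Sum>a<length S. c a * Z $$ (S ! a, j)))"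

lemma subm_carrier[simp]: "subm Z S \<in> carrier_mat (length S) (dim_col Z)"
  unfolding subm_def by simp

lemma subm_carrier': "Z \<in> carrier_mat k d \<Longrightarrow> subm Z S \<in> carrier_mat (length S) d"
  unfolding subm_def by auto

lemma inrow_mono: "inrow Z S r \<Longrightarrow> inrow Z (S @ [i]) r"
proof -
  assume "inrow Z S r"
  then obtain c where c: "\<forall>j<dim_col Z. Z $$ (r, j) = (\<Sum>a<length S. c a * Z $$ (S ! a, j))"
    unfolding inrow_def by blast
  show ?thesis unfolding inrow_def
  proof (intro exI[of _ "\<lambda>a. if a < length S then c a else 0"] allI impI)
    fix j assume j: "j < dim_col Z"
    have "(\<Sum>a<length (S @ [i]). (if a < length S then c a else 0) * Z $$ ((S @ [i]) ! a, j))
       = (\<Sum>a<length S. c a * Z $$ (S ! a, j))"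
      by (simp add: nth_append)
    then show "Z $$ (r, j) = (\<Sum>a<length (S @ [i]). (if a < length S then c a else 0) * Z $$ ((S @ [i]) ! a, j))"
      using c j by simp
  qed
qed

lemma inrow_new: "inrow Z (S @ [i]) i"
  unfolding inrow_def
proof (intro exI[of _ "\<lambda>a. if a = length S then 1 else 0"] allI impI)
  fix j
  have "(\<Sum>a<length (S @ [i]). (if a = length S then 1 else 0) * Z $$ ((S @ [i]) ! a, j)) = Z $$ (i, j)"
    by (simp add: nth_append)
  then show "Z $$ (i, j) = (\<Sum>a<length (S @ [i]). (if a = length S then 1 else 0) * Z $$ ((S @ [i]) ! a, j))"
    by simp
qed

lemma step_dep:
  fixes Z :: "real mat"
  assumes Z: "Z \<in> carrier_mat k d"
    and dS: "det (subm Z S * transpose_mat (subm Z S)) \<noteq> 0"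
    and dSi: "det (subm Z (S @ [i]) * transpose_mat (subm Z (S @ [i]))) = 0"
  shows "inrow Z S i"
proof -
  let ?s = "length S"
  define B where "B = subm Z (S @ [i])"
  define A where "A = subm Z S"
  have B: "B \<in> carrier_mat (Suc ?s) d" using subm_carrier'[OF Z, of "S @ [i]"] by (simp add: B_def)
  have A: "A \<in> carrier_mat ?s d" using subm_carrier'[OF Z, of S] by (simp add: A_def)
  obtain v where v: "v \<in> carrier_vec (Suc ?s)" "v \<noteq> 0\<^sub>v (Suc ?s)" "(B * transpose_mat B) *\<^sub>v v = 0\<^sub>v (Suc ?s)"
    using det_0_iff_vec_prod_zero_field[of "B * transpose_mat B" "Suc ?s"] B dSi B_def by auto
  have Bv: "transpose_mat B *\<^sub>v v = 0\<^sub>v d" by (rule gram_kernel[OF B v(1) v(3)])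
  define f where "f j = (\<Sum>a<?s. v $ a * Z $$ (S ! a, j))" for j
  have eq: "f j + v $ ?s * Z $$ (i, j) = 0" if j: "j < d" for j
  proof -
    have "(transpose_mat B *\<^sub>v v) $ j = (\<Sum>a\<in>{0..<Suc ?s}. B $$ (a, j) * v $ a)"
      using j B v(1) by (simp add: scalar_prod_def)
    also have "\<dots> = (\<Sum>a<Suc ?s. v $ a * Z $$ ((S @ [i]) ! a, j))"
      using j Z by (intro sum.cong) (auto simp: B_def subm_def)
    also have "\<dots> = f j + v $ ?s * Z $$ (i, j)"
      unfolding f_def by (simp add: nth_append)
    finally show ?thesis using Bv j by simp
  qed
  have vs: "v $ ?s \<noteq> 0"
  proof
    assume v0: "v $ ?s = 0"
    define u where "u = vec ?s (\<lambda>a. v $ a)"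
    have u: "u \<in> carrier_vec ?s" by (simp add: u_def)
    have un: "u \<noteq> 0\<^sub>v ?s"
    proof
      assume "u = 0\<^sub>v ?s"
      then have "v $ a = 0" if "a < ?s" for a using that by (metis index_vec index_zero_vec(1) u_def)
      then have "v = 0\<^sub>v (Suc ?s)" using v0 v(1) by (intro eq_vecI) (auto simp: less_Suc_eq)
      then show False using v(2) by simp
    qed
    have Au: "transpose_mat A *\<^sub>v u = 0\<^sub>v d"
    proof (rule eq_vecI)
      fix j assume "j < dim_vec (0\<^sub>v d :: real vec)"
      then have j: "j < d" by simp
      have "(transpose_mat A *\<^sub>v u) $ j = (\<Sum>a\<in>{0..<?s}. A $$ (a, j) * u $ a)"
        using j A u by (simp add: scalar_prod_def)
      also have "\<dots> = f j" unfolding f_def using j Z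
        by (intro sum.cong) (auto simp: A_def subm_def u_def)
      also have "\<dots> = 0" using eq[OF j] v0 by simp
      finally show "(transpose_mat A *\<^sub>v u) $ j = 0\<^sub>v d $ j" using j by simp
    qed (use A in simp)
    have "(A * transpose_mat A) *\<^sub>v u = A *\<^sub>v (transpose_mat A *\<^sub>v u)"
      by (rule assoc_mult_mat_vec) (use A u in auto)
    also have "\<dots> = 0\<^sub>v ?s" unfolding Au using A by (intro eq_vecI) (auto simp: scalar_prod_def)
    finally have "det (A * transpose_mat A) = 0"
      using det_0_iff_vec_prod_zero_field[of "A * transpose_mat A" ?s] A u un by auto
    then show False using dS A_def by simp
  qed
  show ?thesis unfolding inrow_def
  proof (intro exI[of _ "\<lambda>a. - v $ a / v $ ?s"] allI impI)
    fix j assume "j < dim_col Z"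
    then have j: "j < d" using Z by simp
    have "(\<Sum>a<?s. - v $ a / v $ ?s * Z $$ (S ! a, j)) = - f j / v $ ?s"
      unfolding f_def by (simp add: sum_divide_distrib sum_negf)
    also have "\<dots> = Z $$ (i, j)" using eq[OF j] vs by (simp add: field_simps)
    finally show "Z $$ (i, j) = (\<Sum>a<?s. - v $ a / v $ ?s * Z $$ (S ! a, j))" by simp
  qed
qed


lemma proj_formula:
  fixes Z :: "real mat"
  assumes Z: "Z \<in> carrier_mat k d" and S: "set S \<subseteq> {..<k}"
    and dS: "det (subm Z S * transpose_mat (subm Z S)) \<noteq> 0"
    and rows: "\<forall>r<k. inrow Z S r"
  shows "pinv Z * Z = transpose_mat (subm Z S) * (minv (subm Z S * transpose_mat (subm Z S)) * subm Z S)"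
proof -
  let ?s = "length S"
  let ?A = "subm Z S"
  have A: "?A \<in> carrier_mat ?s d" using subm_carrier'[OF Z, of S] by simp
  have "\<forall>r. \<exists>cr. r < k \<longrightarrow> (\<forall>j<d. Z $$ (r, j) = (\<Sum>a<?s. cr a * Z $$ (S ! a, j)))"
    using rows Z unfolding inrow_def by auto
  from choice[OF this] obtain c where c: "\<forall>r<k. \<forall>j<d. Z $$ (r, j) = (\<Sum>a<?s. c r a * Z $$ (S ! a, j))"
    by blast
  define W where "W = mat k ?s (\<lambda>(r, a). c r a)"
  define E where "E = mat ?s k (\<lambda>(a, r). if r = S ! a then 1 else (0::real))"
  have W: "W \<in> carrier_mat k ?s" by (simp add: W_def)
  have E: "E \<in> carrier_mat ?s k" by (simp add: E_def)
  have ZW: "Z = W * ?A"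
  proof (rule eq_matI)
    fix r j assume rj: "r < dim_row (W * ?A)" "j < dim_col (W * ?A)"
    then have r: "r < k" and j: "j < d" using W A by auto
    have "(W * ?A) $$ (r, j) = (\<Sum>a\<in>{0..<?s}. c r a * Z $$ (S ! a, j))"
      using r j W A Z by (simp add: scalar_prod_def W_def subm_def)
    also have "\<dots> = Z $$ (r, j)" using c r j by (simp add: lessThan_atLeast0)
    finally show "Z $$ (r, j) = (W * ?A) $$ (r, j)" by simp
  qed (use W A Z in auto)
  have AE: "?A = E * Z"
  proof (rule eq_matI)
    fix a j assume aj: "a < dim_row (E * Z)" "j < dim_col (E * Z)"
    then have a: "a < ?s" and j: "j < d" using E Z by auto
    have Sa: "S ! a < k" using S a nth_mem[of a S] by blast
    have "(E * Z) $$ (a, j) = (\<Sum>r\<in>{0..<k}. (if r = S ! a then 1 else 0) * Z $$ (r, j))"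
      using a j E Z by (simp add: scalar_prod_def E_def)
    also have "\<dots> = (\<Sum>r\<in>{0..<k}. if r = S ! a then Z $$ (r, j) else 0)"
      by (intro sum.cong) auto
    also have "\<dots> = Z $$ (S ! a, j)" using Sa by (simp add: sum.delta)
    finally show "?A $$ (a, j) = (E * Z) $$ (a, j)" using a j Z by (simp add: subm_def)
  qed (use E Z A in auto)
  show ?thesis by (rule penrose_construct[OF Z A W E ZW AE dS])
qed


definition ent :: "nat \<Rightarrow> nat \<Rightarrow> nat \<Rightarrow> expr" where "ent d r j = Inp (r * d + j)"

definition gramE :: "nat \<Rightarrow> nat \<Rightarrow> nat \<Rightarrow> expr" where
  "gramE d a b = sumE (map (\<lambda>j. Op GMul (ent d a j) (ent d b j)) [0..<d])"

definition GdetE :: "nat \<Rightarrow> nat list \<Rightarrow> expr" where "GdetE d T = detE (gramE d) T T"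

definition predE :: "nat \<Rightarrow> nat list \<Rightarrow> expr" where
  "predE d T = Op GSub zeroE (Op GMul (GdetE d T) (GdetE d T))"

definition termE :: "nat \<Rightarrow> nat list \<Rightarrow> nat \<Rightarrow> nat \<Rightarrow> nat \<Rightarrow> nat \<Rightarrow> expr" where
  "termE d S p q a b = (if length S = 1 then Op GMul (ent d (S ! a) p) (ent d (S ! b) q)
     else Op GMul (Op GMul (ent d (S ! a) p) (ent d (S ! b) q)) (detE (gramE d) (del b S) (del a S)))"

definition numE :: "nat \<Rightarrow> nat list \<Rightarrow> nat \<Rightarrow> nat \<Rightarrow> expr" where
  "numE d S p q = ssum (concat (map (\<lambda>a. map (\<lambda>b. (even (a + b), termE d S p q a b)) [0..<length S]) [0..<length S]))"

definition outE :: "nat \<Rightarrow> nat list \<Rightarrow> nat \<Rightarrow> nat \<Rightarrow> expr" where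
  "outE d S p q = (if S = [] then zeroE else Op GDiv (numE d S p q) (GdetE d S))"

definition outEs :: "nat \<Rightarrow> nat list \<Rightarrow> expr list" where
  "outEs d S = concat (map (\<lambda>p. map (\<lambda>q. outE d S p q) [0..<d]) [0..<d])"

definition gx :: "'a::field list \<Rightarrow> nat \<Rightarrow> nat \<Rightarrow> nat \<Rightarrow> 'a" where
  "gx xs d a b = (\<Sum>j<d. xs ! (a * d + j) * xs ! (b * d + j))"

lemma sum_list_concat': "sum_list (concat xss) = sum_list (map sum_list (xss :: 'a::monoid_add list list))"
  by (induction xss) auto

lemma eval_ent[simp]: "eval xs (ent d r j) = xs ! (r * d + j)"
  unfolding ent_def by simp

lemma eval_gramE: "eval xs (gramE d a b) = gx xs d a b"
  unfolding gramE_def gx_def eval_sumE map_map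
  by (simp add: o_def interv_sum_list_conv_sum_set_nat lessThan_atLeast0)

lemma eval_GdetE: "T \<noteq> [] \<Longrightarrow> eval xs (GdetE d T) = ldet (gx xs d) T T"
  unfolding GdetE_def by (simp add: eval_detE eval_gramE)

lemma eval_termE: "length S \<ge> 1 \<Longrightarrow> a < length S \<Longrightarrow> b < length S \<Longrightarrow>
  eval xs (termE d S p q a b) = xs ! (S ! a * d + p) * xs ! (S ! b * d + q) * ldet (gx xs d) (del b S) (del a S)"
proof (cases "length S = 1")
  case True
  assume "a < length S" "b < length S"
  then have "a = 0" "b = 0" using True by auto
  then have "del b S = []" "del a S = []" using True by (auto simp: del_def)
  then show ?thesis using True by (simp add: termE_def)
next
  case False
  assume "length S \<ge> 1" "a < length S" "b < length S"
  then have "length (del b S) = length S - 1" "length (del a S) = length S - 1" by (auto simp: length_del)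
  then have "del b S \<noteq> []" "length (del a S) = length (del b S)" using False \<open>length S \<ge> 1\<close> by auto
  then show ?thesis using False
    by (simp add: termE_def eval_detE eval_gramE)
qed

lemma eval_numE: "S \<noteq> [] \<Longrightarrow> eval xs (numE d S p q) =
  (\<Sum>a<length S. \<Sum>b<length S. (-1) ^ (a + b) * (xs ! (S ! a * d + p) * xs ! (S ! b * d + q) * ldet (gx xs d) (del b S) (del a S)))"
proof -
  assume S: "S \<noteq> []"
  have "eval xs (numE d S p q) = (\<Sum>a<length S. \<Sum>b<length S. (if even (a + b) then eval xs (termE d S p q a b) else - eval xs (termE d S p q a b)))"
    unfolding numE_def eval_ssum
    by (simp add: map_concat o_def sum_list_concat' interv_sum_list_conv_sum_set_nat lessThan_atLeast0)
  also have "\<dots> = (\<Sum>a<length S. \<Sum>b<length S. (-1) ^ (a + b) * (xs ! (S ! a * d + p) * xs ! (S ! b * d + q) * ldet (gx xs d) (del b S) (del a S)))"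
    using S by (intro sum.cong refl) (auto simp: eval_termE)
  finally show ?thesis .
qed


lemma gram_mat:
  assumes Z: "Z \<in> carrier_mat k d" and xs: "\<forall>r<k. \<forall>j<d. Z $$ (r, j) = xs ! (r * d + j)"
    and T: "set T \<subseteq> {..<k}"
  shows "subm Z T * transpose_mat (subm Z T) = mat (length T) (length T) (\<lambda>(x, y). gx xs d (T ! x) (T ! y))"
proof (rule eq_matI)
  fix x y assume "x < dim_row (mat (length T) (length T) (\<lambda>(x, y). gx xs d (T ! x) (T ! y)))"
    "y < dim_col (mat (length T) (length T) (\<lambda>(x, y). gx xs d (T ! x) (T ! y)))"
  then have x: "x < length T" and y: "y < length T" by auto
  have Tx: "T ! x < k" and Ty: "T ! y < k" using T x y nth_mem[of x T] nth_mem[of y T] by blast+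
  have "(subm Z T * transpose_mat (subm Z T)) $$ (x, y) = (\<Sum>j\<in>{0..<d}. Z $$ (T ! x, j) * Z $$ (T ! y, j))"
    using x y Z by (simp add: subm_def scalar_prod_def)
  also have "\<dots> = gx xs d (T ! x) (T ! y)" unfolding gx_def using xs Tx Ty
    by (simp add: lessThan_atLeast0)
  finally show "(subm Z T * transpose_mat (subm Z T)) $$ (x, y) = mat (length T) (length T) (\<lambda>(x, y). gx xs d (T ! x) (T ! y)) $$ (x, y)"
    using x y by simp
qed (use Z in \<open>auto simp: subm_def\<close>)

lemma det_gram:
  assumes Z: "Z \<in> carrier_mat k d" and xs: "\<forall>r<k. \<forall>j<d. Z $$ (r, j) = xs ! (r * d + j)"
    and T: "set T \<subseteq> {..<k}" "T \<noteq> []"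
  shows "eval xs (GdetE d T) = det (subm Z T * transpose_mat (subm Z T))"
proof -
  have "eval xs (GdetE d T) = ldet (gx xs d) T T" by (rule eval_GdetE[OF T(2)])
  also have "\<dots> = det (mat (length T) (length T) (\<lambda>(x, y). gx xs d (T ! x) (T ! y)))"
    by (rule ldet_det) simp
  also have "\<dots> = det (subm Z T * transpose_mat (subm Z T))" using gram_mat[OF Z xs T(1)] by simp
  finally show ?thesis .
qed

lemma entry_formula:
  assumes Z: "Z \<in> carrier_mat k d" and xs: "\<forall>r<k. \<forall>j<d. Z $$ (r, j) = xs ! (r * d + j)"
    and S: "set S \<subseteq> {..<k}" "S \<noteq> []" and p: "p < d" and q: "q < d"
    and dG: "det (subm Z S * transpose_mat (subm Z S)) \<noteq> 0"
  shows "(transpose_mat (subm Z S) * (minv (subm Z S * transpose_mat (subm Z S)) * subm Z S)) $$ (p, q)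
     = eval xs (outE d S p q)"
proof -
  let ?s = "length S"
  let ?A = "subm Z S"
  let ?G = "subm Z S * transpose_mat (subm Z S)"
  let ?D = "det ?G"
  let ?L = "\<lambda>a b. ldet (gx xs d) (del b S) (del a S)"
  have A: "?A \<in> carrier_mat ?s d" using subm_carrier'[OF Z] by simp
  have G: "?G \<in> carrier_mat ?s ?s" using A by simp
  have Gm: "?G = mat ?s ?s (\<lambda>(x, y). gx xs d (S ! x) (S ! y))" by (rule gram_mat[OF Z xs S(1)])
  have Sk: "S ! a < k" if "a < ?s" for a using S(1) that nth_mem[of a S] by blast
  have Aent: "?A $$ (a, j) = xs ! (S ! a * d + j)" if "a < ?s" "j < d" for a j
    using that Z xs Sk[OF that(1)] by (simp add: subm_def)
  have del: "det (mat_delete ?G b a) = ?L a b" if ab: "a < ?s" "b < ?s" for a b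
  proof -
    have "mat_delete ?G b a = mat (length (del b S)) (length (del b S)) (\<lambda>(x, y). gx xs d (del b S ! x) (del a S ! y))"
      unfolding Gm by (rule eq_matI) (use ab in \<open>auto simp: mat_delete_def nth_del length_del\<close>)
    then show ?thesis using ldet_det[of "del a S" "del b S" "gx xs d"] ab by (simp add: length_del)
  qed
  have minv_ent: "minv ?G $$ (a, b) = (1 / ?D) * ((-1) ^ (a + b) * ?L a b)" if ab: "a < ?s" "b < ?s" for a b
  proof -
    have dr: "dim_row ?A = ?s" using A by simp
    show ?thesis using ab G del[OF ab] by (simp add: minv_def adj_mat_def cofactor_def add.commute dr)
  qed
  have "(transpose_mat ?A * (minv ?G * ?A)) $$ (p, q) =
      (\<Sum>a\<in>{0..<?s}. ?A $$ (a, p) * (\<Sum>b\<in>{0..<?s}. minv ?G $$ (a, b) * ?A $$ (b, q)))"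
    using A G p q by (simp add: scalar_prod_def minv_def adj_mat_def)
  also have "\<dots> = (\<Sum>a\<in>{0..<?s}. \<Sum>b\<in>{0..<?s}. ((-1) ^ (a + b) * (xs ! (S ! a * d + p) * xs ! (S ! b * d + q) * ?L a b)) / ?D)"
    by (intro sum.cong refl) (auto simp: sum_distrib_left minv_ent Aent p q intro!: sum.cong)
  also have "\<dots> = eval xs (numE d S p q) / ?D"
    unfolding eval_numE[OF S(2)] by (simp add: sum_divide_distrib lessThan_atLeast0)
  also have "\<dots> = eval xs (outE d S p q)"
    using det_gram[OF Z xs S] S(2) by (simp add: outE_def)
  finally show ?thesis .
qed


lemma dgood_mono: "dgood B e \<Longrightarrow> B \<le> B' \<Longrightarrow> dgood B' e"
  unfolding dgood_def by auto

lemma gramE_props: "sdeg (gramE d a b) \<le> 2 \<and> divfree (gramE d a b) \<and>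
   inps (gramE d a b) \<subseteq> insert 0 ({a * d + j | j. j < d} \<union> {b * d + j | j. j < d})"
proof -
  have "sdeg (sumE (map (\<lambda>j. Op GMul (ent d a j) (ent d b j)) [0..<d])) \<le> 2 \<and>
    divfree (sumE (map (\<lambda>j. Op GMul (ent d a j) (ent d b j)) [0..<d])) \<and>
    inps (sumE (map (\<lambda>j. Op GMul (ent d a j) (ent d b j)) [0..<d])) \<subseteq> insert 0 (\<Union>e\<in>set (map (\<lambda>j. Op GMul (ent d a j) (ent d b j)) [0..<d]). inps e)"
    by (rule sumE_props) (auto simp: ent_def)
  then show ?thesis unfolding gramE_def by (auto simp: ent_def)
qed

lemma idx_bound: "a < k \<Longrightarrow> j < d \<Longrightarrow> a * d + j < k * (d::nat)"
proof -
  assume "a < k" "j < d"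
  then have "a * d + j < a * d + d" by simp
  also have "\<dots> = Suc a * d" by simp
  also have "\<dots> \<le> k * d" using \<open>a < k\<close> by (intro mult_right_mono) auto
  finally show ?thesis .
qed

lemma gramE_inps: "a < k \<Longrightarrow> b < k \<Longrightarrow> 0 < d \<Longrightarrow> inps (gramE d a b) \<subseteq> {..<k * d}"
  using gramE_props[of d a b] idx_bound[of a k _ d] idx_bound[of b k _ d] by fastforce

lemma detG_props:
  assumes "rs \<noteq> []" "length cs = length rs" "set rs \<subseteq> {..<k}" "set cs \<subseteq> {..<k}" "0 < d"
  shows "sdeg (detE (gramE d) rs cs) \<le> 2 * length rs \<and> divfree (detE (gramE d) rs cs) \<and>
     inps (detE (gramE d) rs cs) \<subseteq> {..<k * d}"
proof -
  have "sdeg (detE (gramE d) rs cs) \<le> 2 * length rs \<and> divfree (detE (gramE d) rs cs) \<and>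
     inps (detE (gramE d) rs cs) \<subseteq> insert 0 (\<Union>a\<in>set rs. \<Union>b\<in>set cs. inps (gramE d a b))"
    by (rule detE_props) (use gramE_props assms in auto)
  moreover have kd: "0 < k * d" using assms by (cases rs) auto
  moreover have "(\<Union>a\<in>set rs. \<Union>b\<in>set cs. inps (gramE d a b)) \<subseteq> {..<k * d}"
    using gramE_inps[of _ k _ d] assms by blast
  then have "insert 0 (\<Union>a\<in>set rs. \<Union>b\<in>set cs. inps (gramE d a b)) \<subseteq> {..<k * d}" using kd by blast
  ultimately show ?thesis by blast
qed

lemma predE_props:
  assumes "T \<noteq> []" "set T \<subseteq> {..<k}" "length T \<le> k" "0 < d"
  shows "dgood (4 * k) (predE d T) \<and> inps (predE d T) \<subseteq> {..<k * d}"
proof -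
  have D: "sdeg (GdetE d T) \<le> 2 * length T \<and> divfree (GdetE d T) \<and> inps (GdetE d T) \<subseteq> {..<k * d}"
    unfolding GdetE_def by (rule detG_props) (use assms in auto)
  have "0 < k * d" using assms by (cases T) auto
  then show ?thesis using D assms unfolding predE_def dgood_def by (auto simp: zeroE_def)
qed

lemma outE_props:
  assumes "set S \<subseteq> {..<k}" "length S \<le> k" "0 < d" "0 < k" "p < d" "q < d"
  shows "dgood (4 * k) (outE d S p q) \<and> inps (outE d S p q) \<subseteq> {..<k * d}"
proof (cases "S = []")
  case True
  have "0 < k * d" using assms by simp
  then show ?thesis using True assms by (auto simp: outE_def dgood_def)
next
  case False
  have kd: "0 < k * d" using assms by simp
  have D: "sdeg (GdetE d S) \<le> 2 * length S \<and> divfree (GdetE d S) \<and> inps (GdetE d S) \<subseteq> {..<k * d}"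
    unfolding GdetE_def by (rule detG_props) (use assms False in auto)
  have Sa: "S ! a < k" if "a < length S" for a using assms(1) that nth_mem[of a S] by blast
  have T: "sdeg (termE d S p q a b) \<le> 2 * length S \<and> divfree (termE d S p q a b) \<and> inps (termE d S p q a b) \<subseteq> {..<k * d}"
    if ab: "a < length S" "b < length S" for a b
  proof (cases "length S = 1")
    case True
    then show ?thesis using ab Sa[OF ab(1)] Sa[OF ab(2)] idx_bound[of "S ! a" k p d] idx_bound[of "S ! b" k q d] assms
      by (auto simp: termE_def ent_def)
  next
    case False
    then have l: "length (del b S) = length S - 1" "length (del a S) = length S - 1" "length S \<ge> 2"
      using ab by (auto simp: length_del)
    have DD: "sdeg (detE (gramE d) (del b S) (del a S)) \<le> 2 * length (del b S) \<and> divfree (detE (gramE d) (del b S) (del a S)) \<and>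
     inps (detE (gramE d) (del b S) (del a S)) \<subseteq> {..<k * d}"
      by (rule detG_props) (use l assms set_del[of b S] set_del[of a S] in auto)
    have "2 + 2 * (length S - 1) = 2 * length S" using l by simp
    then show ?thesis using False DD l ab Sa[OF ab(1)] Sa[OF ab(2)] idx_bound[of "S ! a" k p d] idx_bound[of "S ! b" k q d] assms
      by (auto simp: termE_def ent_def)
  qed
  have "1 \<le> 2 * length S" using False by (cases S) auto
  have N: "sdeg (numE d S p q) \<le> 2 * length S \<and> divfree (numE d S p q) \<and>
    inps (numE d S p q) \<subseteq> insert 0 (\<Union>(s, e)\<in>set (concat (map (\<lambda>a. map (\<lambda>b. (even (a + b), termE d S p q a b)) [0..<length S]) [0..<length S])). inps e)"
    unfolding numE_def by (rule ssum_props) (use T \<open>1 \<le> 2 * length S\<close> in auto)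
  have N2: "inps (numE d S p q) \<subseteq> {..<k * d}" using N T kd by fastforce
  have "2 * length S \<le> 4 * k" using assms by simp
  then show ?thesis using False N N2 D unfolding outE_def dgood_def by auto
qed


definition outP :: "nat \<Rightarrow> nat list \<Rightarrow> nat \<Rightarrow> gj" where
  "outP d S m = emit (fst (codes (outEs d S) m)) (GOutput (snd (codes (outEs d S) m)))"

function greedy :: "nat \<Rightarrow> nat \<Rightarrow> nat \<Rightarrow> nat list \<Rightarrow> nat \<Rightarrow> gj" where
  "greedy k d i S m = (if i < k then
     emit (fst (code (predE d (S @ [i])) m))
       (GBranch (snd (code (predE d (S @ [i])) m))
          (greedy k d (Suc i) S (m + length (fst (code (predE d (S @ [i])) m))))
          (greedy k d (Suc i) (S @ [i]) (m + length (fst (code (predE d (S @ [i])) m)))))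
   else outP d S m)"
  by pat_completeness auto
termination by (relation "measure (\<lambda>(k, d, i, S, m). k - i)") auto

declare greedy.simps[simp del]

lemma outEs_props:
  assumes "set S \<subseteq> {..<k}" "length S \<le> k" "0 < d" "0 < k"
  shows "\<forall>e\<in>set (outEs d S). dgood (4 * k) e \<and> inps e \<subseteq> {..<k * d}"
  using outE_props[OF assms] unfolding outEs_def by auto

lemma sorted_len: "sorted_wrt (<) T \<Longrightarrow> set T \<subseteq> {..<k} \<Longrightarrow> length T \<le> (k::nat)"
proof -
  assume "sorted_wrt (<) T" "set T \<subseteq> {..<k}"
  then have "distinct T" using strict_sorted_iff by blast
  then have "length T = card (set T)" by (simp add: distinct_card)
  also have "\<dots> \<le> card {..<k}" using \<open>set T \<subseteq> {..<k}\<close> by (intro card_mono) auto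
  finally show ?thesis by simp
qed

lemma greedy_T:
  assumes "sorted_wrt (<) S" "\<forall>x\<in>set S. x < i" "i < k"
  shows "sorted_wrt (<) (S @ [i]) \<and> set (S @ [i]) \<subseteq> {..<k} \<and> length (S @ [i]) \<le> k"
proof -
  have s: "sorted_wrt (<) (S @ [i])" using assms by (auto simp: sorted_wrt_append)
  have t: "set (S @ [i]) \<subseteq> {..<k}" using assms by auto
  show ?thesis using s t sorted_len[OF s t] by blast
qed

lemma outP_wf:
  assumes "k * d \<le> m" "set S \<subseteq> {..<k}" "length S \<le> k" "0 < d" "0 < k"
  shows "gj_wf (outP d S m) m"
proof -
  let ?xs = "replicate (k * d) (0::real)"
  have "\<forall>e\<in>set (outEs d S). inps e \<subseteq> {..<length ?xs}" using outEs_props[OF assms(2-5)] by simp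
  from codes_props[OF this, of m] assms(1)
  show ?thesis unfolding outP_def wf_emit by auto
qed

lemma greedy_wf:
  "k * d \<le> m \<Longrightarrow> sorted_wrt (<) S \<Longrightarrow> \<forall>x\<in>set S. x < i \<Longrightarrow> i \<le> k \<Longrightarrow> 0 < d \<Longrightarrow> 0 < k \<Longrightarrow> gj_wf (greedy k d i S m) m"
proof (induction k d i S m rule: greedy.induct)
  case (1 k d i S m)
  show ?case
  proof (cases "i < k")
    case True
    let ?e = "predE d (S @ [i])"
    let ?xs = "replicate (k * d) (0::real)"
    have T: "sorted_wrt (<) (S @ [i]) \<and> set (S @ [i]) \<subseteq> {..<k} \<and> length (S @ [i]) \<le> k"
      using greedy_T "1.prems" True by blast
    have "inps ?e \<subseteq> {..<length ?xs}" using predE_props[of "S @ [i]" k d] T "1.prems" by simp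
    from code_props[OF this, of m] "1.prems"
    have c: "wfins (fst (code ?e m)) m" "snd (code ?e m) < m + length (fst (code ?e m))" by auto
    have w1: "gj_wf (greedy k d (Suc i) S (m + length (fst (code ?e m)))) (m + length (fst (code ?e m)))"
      by (rule "1.IH"(1)) (use True "1.prems" in auto)
    have w2: "gj_wf (greedy k d (Suc i) (S @ [i]) (m + length (fst (code ?e m)))) (m + length (fst (code ?e m)))"
      by (rule "1.IH"(2)) (use True "1.prems" T in auto)
    show ?thesis using True c w1 w2 by (subst greedy.simps) (simp add: wf_emit)
  next
    case False
    then have "i = k" using "1.prems" by simp
    then have "set S \<subseteq> {..<k}" using "1.prems" by auto
    moreover have "length S \<le> k" using sorted_len "1.prems" calculation by blast
    moreover have "0 < k" using "1.prems" by simp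
    ultimately show ?thesis using False outP_wf[of k d m S] "1.prems"
      by (subst greedy.simps) auto
  qed
qed


lemma mat_of_input_props:
  "mat_of_input k d xs \<in> carrier_mat k d \<and> (\<forall>r<k. \<forall>j<d. mat_of_input k d xs $$ (r, j) = xs ! (r * d + j))"
  unfolding mat_of_input_def by auto

lemma dgood_div: "dgood B e \<Longrightarrow> Op GDiv a b \<in> subs e \<Longrightarrow> e = Op GDiv a b"
proof -
  have nd: "divfree e' \<Longrightarrow> Op GDiv a b \<notin> subs e'" for e' by (induction e') auto
  assume "dgood B e" "Op GDiv a b \<in> subs e"
  then show ?thesis unfolding dgood_def using nd by auto
qed

lemma det_empty: "M \<in> carrier_mat 0 0 \<Longrightarrow> det (M :: 'a::comm_ring_1 mat) = 1"
proof -
  assume "M \<in> carrier_mat 0 0"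
  then have "M = mat 0 0 (\<lambda>_. 0)" by (intro eq_matI) auto
  then show ?thesis using det_mat0 by simp
qed

lemma outP_exec:
  fixes xs :: "real list"
  assumes xs: "length xs = k * d" and dk: "0 < d" "0 < k" and S: "set S \<subseteq> {..<k}" "length S \<le> k"
    and Zd: "Z = mat_of_input k d xs"
    and dS: "det (subm Z S * transpose_mat (subm Z S)) \<noteq> 0" and rows: "\<forall>r<k. inrow Z S r"
    and m: "length (xs @ ys) = m"
  shows "gj_exec (outP d S m) (xs @ ys) = Some (mat_entries (pinv Z * Z))"
proof -
  have Z: "Z \<in> carrier_mat k d" and Zx: "\<forall>r<k. \<forall>j<d. Z $$ (r, j) = xs ! (r * d + j)"
    using mat_of_input_props[of k d xs] Zd by auto
  note P = outEs_props[OF S dk]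
  have "\<forall>e\<in>set (outEs d S). inps e \<subseteq> {..<length xs}" using P xs by simp
  note C = codes_props[OF this, of m]
  have m': "length xs \<le> m" using m by simp
  let ?is = "fst (codes (outEs d S) m)" and ?rs = "snd (codes (outEs d S) m)"
  have nodiv: "\<forall>e\<in>set (outEs d S). \<forall>a b. Op GDiv a b \<in> subs e \<longrightarrow> eval xs b \<noteq> 0"
  proof (intro ballI allI impI)
    fix e a b assume e: "e \<in> set (outEs d S)" and ab: "Op GDiv a b \<in> subs e"
    then have eq: "e = Op GDiv a b" using P dgood_div by blast
    obtain p q where pq: "p < d" "q < d" "e = outE d S p q" using e unfolding outEs_def by auto
    have "S \<noteq> []" using eq pq by (auto simp: outE_def zeroE_def)
    then have "b = GdetE d S" using eq pq by (simp add: outE_def)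
    then show "eval xs b \<noteq> 0" using det_gram[OF Z Zx S(1) \<open>S \<noteq> []\<close>] dS by simp
  qed
  have wf: "wfins ?is (length (xs @ ys))" and rok: "rok ?is (xs @ ys)"
    and mp: "map (\<lambda>r. srun ?is (xs @ ys) ! r) ?rs = map (eval xs) (outEs d S)"
    and rb: "\<forall>r\<in>set ?rs. r < m + length ?is"
    using C m' m nodiv by auto
  have "gj_exec (outP d S m) (xs @ ys) = gj_exec (GOutput ?rs) (srun ?is (xs @ ys))"
    unfolding outP_def by (rule exec_emit[OF wf rok])
  also have "\<dots> = Some (map (eval xs) (outEs d S))"
    using rb m mp by simp
  also have "map (eval xs) (outEs d S) = mat_entries (pinv Z * Z)"
  proof -
    let ?A = "subm Z S"
    have PZ: "pinv Z * Z = transpose_mat ?A * (minv (?A * transpose_mat ?A) * ?A)"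
      by (rule proj_formula[OF Z S(1) dS rows])
    have A: "?A \<in> carrier_mat (length S) d" using subm_carrier'[OF Z] by simp
    have G: "minv (?A * transpose_mat ?A) \<in> carrier_mat (length S) (length S)"
      unfolding minv_def using A adj_mat[of "?A * transpose_mat ?A" "length S"] by simp
    have dims: "dim_row (pinv Z * Z) = d" "dim_col (pinv Z * Z) = d" unfolding PZ using A G by auto
    have ent: "(pinv Z * Z) $$ (p, q) = eval xs (outE d S p q)" if pq: "p < d" "q < d" for p q
    proof (cases "S = []")
      case True
      have "(pinv Z * Z) $$ (p, q) = 0" unfolding PZ using A G pq True by (simp add: scalar_prod_def)
      then show ?thesis using True by (simp add: outE_def)
    next
      case False
      show ?thesis unfolding PZ by (rule entry_formula[OF Z Zx S(1) False pq dS])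
    qed
    show ?thesis unfolding mat_entries_def dims outEs_def
      by (simp add: map_concat o_def, intro arg_cong[where f = concat] map_cong refl) (simp add: ent)
  qed
  finally show ?thesis .
qed

lemma greedy_exec:
  fixes xs :: "real list"
  assumes xs: "length xs = k * d" and dk: "0 < d" "0 < k" and Zd: "Z = mat_of_input k d xs"
  shows "length (xs @ ys) = m \<Longrightarrow> sorted_wrt (<) S \<Longrightarrow> \<forall>x\<in>set S. x < i \<Longrightarrow> i \<le> k \<Longrightarrow>
    det (subm Z S * transpose_mat (subm Z S)) \<noteq> 0 \<Longrightarrow> \<forall>r<i. inrow Z S r \<Longrightarrow>
    gj_exec (greedy k d i S m) (xs @ ys) = Some (mat_entries (pinv Z * Z))"
proof (induction "k - i" arbitrary: i S m ys)
  case 0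
  then have ik: "i = k" by simp
  have S: "set S \<subseteq> {..<k}" using "0.prems" ik by auto
  have Sl: "length S \<le> k" using sorted_len[OF "0.prems"(2) S] .
  have rows: "\<forall>r<k. inrow Z S r" using "0.prems" ik by simp
  have "greedy k d i S m = outP d S m" using ik by (subst greedy.simps) simp
  then show ?case using outP_exec[OF xs dk S Sl Zd "0.prems"(5) rows "0.prems"(1)] by simp
next
  case (Suc n)
  note pr = Suc.prems
  have ik: "i < k" using Suc.hyps(2) by simp
  have Z: "Z \<in> carrier_mat k d" and Zx: "\<forall>r<k. \<forall>j<d. Z $$ (r, j) = xs ! (r * d + j)"
    using mat_of_input_props[of k d xs] Zd by auto
  let ?T = "S @ [i]"
  let ?e = "predE d ?T"
  let ?is = "fst (code ?e m)" and ?r = "snd (code ?e m)"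
  have T: "sorted_wrt (<) ?T \<and> set ?T \<subseteq> {..<k} \<and> length ?T \<le> k"
    using greedy_T pr ik by blast
  have E: "dgood (4 * k) ?e \<and> inps ?e \<subseteq> {..<k * d}" using predE_props[of ?T k d] T dk by simp
  have nodiv: "\<forall>a b. Op GDiv a b \<in> subs ?e \<longrightarrow> eval xs b \<noteq> 0"
    using E dgood_div[of "4 * k" ?e] by (auto simp: predE_def)
  have "inps ?e \<subseteq> {..<length xs}" using E xs by simp
  note C = code_props[OF this, of m]
  have m': "length xs \<le> m" using pr by simp
  have wf: "wfins ?is (length (xs @ ys))" and rb: "?r < m + length ?is"
    and val: "srun ?is (xs @ ys) ! ?r = eval xs ?e" and rok: "rok ?is (xs @ ys)"
    using C m' pr(1) nodiv by auto
  obtain zs where zs: "srun ?is (xs @ ys) = xs @ ys @ zs" "length zs = length ?is"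
    using srun_ext[of ?is "xs @ ys"] by auto
  have D: "eval xs (GdetE d ?T) = det (subm Z ?T * transpose_mat (subm Z ?T))"
    by (rule det_gram[OF Z Zx]) (use T in auto)
  let ?D = "det (subm Z ?T * transpose_mat (subm Z ?T))"
  have ev: "eval xs ?e = - (?D * ?D)" using D by (simp add: predE_def)
  have g: "greedy k d i S m = emit ?is (GBranch ?r (greedy k d (Suc i) S (m + length ?is))
          (greedy k d (Suc i) ?T (m + length ?is)))"
    using ik by (subst greedy.simps) simp
  have len: "length (xs @ ys @ zs) = m + length ?is" using pr(1) zs by simp
  have ex: "gj_exec (greedy k d i S m) (xs @ ys) =
     (if - (?D * ?D) \<ge> 0 then gj_exec (greedy k d (Suc i) S (m + length ?is)) (xs @ (ys @ zs))
      else gj_exec (greedy k d (Suc i) ?T (m + length ?is)) (xs @ (ys @ zs)))"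
    unfolding g exec_emit[OF wf rok] zs(1) using rb len val zs ev by simp
  show ?case
  proof (cases "?D = 0")
    case True
    have rows: "\<forall>r<Suc i. inrow Z S r"
      using pr(6) step_dep[OF Z pr(5) True] less_Suc_eq by auto
    have "gj_exec (greedy k d (Suc i) S (m + length ?is)) (xs @ (ys @ zs)) = Some (mat_entries (pinv Z * Z))"
      by (rule Suc.hyps(1)) (use Suc.hyps(2) len pr rows ik in auto)
    then show ?thesis using ex True by simp
  next
    case False
    have rows: "\<forall>r<Suc i. inrow Z ?T r"
      using pr(6) inrow_mono inrow_new less_Suc_eq by auto
    have "gj_exec (greedy k d (Suc i) ?T (m + length ?is)) (xs @ (ys @ zs)) = Some (mat_entries (pinv Z * Z))"
      by (rule Suc.hyps(1)) (use Suc.hyps(2) len pr rows ik T False in auto)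
    moreover have "\<not> - (?D * ?D) \<ge> 0"
    proof -
      have "?D * ?D > 0" using False not_real_square_gt_zero by blast
      then show ?thesis by simp
    qed
    ultimately show ?thesis using ex by simp
  qed
qed


lemma len_inputs[simp]: "length (gj_inputs n) = n"
  unfolding gj_inputs_def by simp

definition PS :: "nat \<Rightarrow> nat \<Rightarrow> ratfun set" where
  "PS k d = (\<lambda>T. eval (gj_inputs (k * d)) (predE d T)) ` {T. sorted_wrt (<) T \<and> set T \<subseteq> {..<k}}"

lemma outP_sym:
  assumes S: "set S \<subseteq> {..<k}" "length S \<le> k" and dk: "0 < d" "0 < k"
    and m: "length (gj_inputs (k * d) @ ys) = m"
  shows "(\<forall>v\<in>gj_sym_vals (outP d S m) (gj_inputs (k * d) @ ys). ratfun_deg v \<le> 4 * k) \<and>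
         gj_sym_preds (outP d S m) (gj_inputs (k * d) @ ys) = {}"
proof -
  let ?xs = "gj_inputs (k * d)"
  note P = outEs_props[OF S dk]
  have "\<forall>e\<in>set (outEs d S). inps e \<subseteq> {..<length ?xs}" using P by simp
  note C = codes_props[OF this, of m]
  let ?is = "fst (codes (outEs d S) m)" and ?rs = "snd (codes (outEs d S) m)"
  have sub: "set (drop m (srun ?is (?xs @ ys))) \<subseteq> eval ?xs ` (\<Union>e\<in>set (outEs d S). subs e)"
    using C m by auto
  have "\<forall>v\<in>set (drop m (srun ?is (?xs @ ys))). ratfun_deg v \<le> 4 * k"
  proof
    fix v assume "v \<in> set (drop m (srun ?is (?xs @ ys)))"
    then obtain e e' where "e \<in> set (outEs d S)" "e' \<in> subs e" "v = eval ?xs e'" using sub by blast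
    then show "ratfun_deg v \<le> 4 * k" using dgood_deg[of "4 * k" e "k * d" e'] P by auto
  qed
  then show ?thesis unfolding outP_def vals_emit preds_emit using m by simp
qed

lemma greedy_sym:
  assumes dk: "0 < d" "0 < k"
  shows "length (gj_inputs (k * d) @ ys) = m \<Longrightarrow> sorted_wrt (<) S \<Longrightarrow> \<forall>x\<in>set S. x < i \<Longrightarrow> i \<le> k \<Longrightarrow>
    (\<forall>v\<in>gj_sym_vals (greedy k d i S m) (gj_inputs (k * d) @ ys). ratfun_deg v \<le> 4 * k) \<and>
    gj_sym_preds (greedy k d i S m) (gj_inputs (k * d) @ ys) \<subseteq> PS k d"
proof (induction "k - i" arbitrary: i S m ys)
  case 0
  then have ik: "i = k" by simp
  have S: "set S \<subseteq> {..<k}" using "0.prems" ik by auto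
  have Sl: "length S \<le> k" using sorted_len[OF "0.prems"(2) S] .
  have "greedy k d i S m = outP d S m" using ik by (subst greedy.simps) simp
  then show ?case using outP_sym[OF S Sl dk "0.prems"(1)] by simp
next
  case (Suc n)
  note pr = Suc.prems
  have ik: "i < k" using Suc.hyps(2) by simp
  let ?xs = "gj_inputs (k * d)"
  let ?T = "S @ [i]"
  let ?e = "predE d ?T"
  let ?is = "fst (code ?e m)" and ?r = "snd (code ?e m)"
  have T: "sorted_wrt (<) ?T \<and> set ?T \<subseteq> {..<k} \<and> length ?T \<le> k"
    using greedy_T pr ik by blast
  have E: "dgood (4 * k) ?e \<and> inps ?e \<subseteq> {..<k * d}" using predE_props[of ?T k d] T dk by simp
  have "inps ?e \<subseteq> {..<length ?xs}" using E by simp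
  note C = code_props[OF this, of m]
  have m': "length ?xs \<le> m" using pr by simp
  have rb: "?r < m + length ?is"
    and val: "srun ?is (?xs @ ys) ! ?r = eval ?xs ?e"
    and sub: "set (drop m (srun ?is (?xs @ ys))) \<subseteq> eval ?xs ` subs ?e"
    using C m' pr(1) by auto
  obtain zs where zs: "srun ?is (?xs @ ys) = ?xs @ ys @ zs" "length zs = length ?is"
    using srun_ext[of ?is "?xs @ ys"] by auto
  have len: "length (?xs @ ys @ zs) = m + length ?is" using pr(1) zs by simp
  have g: "greedy k d i S m = emit ?is (GBranch ?r (greedy k d (Suc i) S (m + length ?is))
          (greedy k d (Suc i) ?T (m + length ?is)))"
    using ik by (subst greedy.simps) simp
  have IH1: "(\<forall>v\<in>gj_sym_vals (greedy k d (Suc i) S (m + length ?is)) (?xs @ (ys @ zs)). ratfun_deg v \<le> 4 * k) \<and>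
    gj_sym_preds (greedy k d (Suc i) S (m + length ?is)) (?xs @ (ys @ zs)) \<subseteq> PS k d"
    by (rule Suc.hyps(1)) (use Suc.hyps(2) len pr ik in auto)
  have IH2: "(\<forall>v\<in>gj_sym_vals (greedy k d (Suc i) ?T (m + length ?is)) (?xs @ (ys @ zs)). ratfun_deg v \<le> 4 * k) \<and>
    gj_sym_preds (greedy k d (Suc i) ?T (m + length ?is)) (?xs @ (ys @ zs)) \<subseteq> PS k d"
    by (rule Suc.hyps(1)) (use Suc.hyps(2) len pr ik T in auto)
  have v1: "\<forall>v\<in>set (drop m (srun ?is (?xs @ ys))). ratfun_deg v \<le> 4 * k"
  proof
    fix v assume "v \<in> set (drop m (srun ?is (?xs @ ys)))"
    then obtain e' where "e' \<in> subs ?e" "v = eval ?xs e'" using sub by blast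
    then show "ratfun_deg v \<le> 4 * k" using dgood_deg[of "4 * k" ?e "k * d" e'] E by auto
  qed
  have pv: "eval ?xs ?e \<in> PS k d" unfolding PS_def using T by blast
  have vr: "(?xs @ ys @ zs) ! ?r = eval ?xs ?e" using val zs by simp
  note v1' = v1[unfolded zs(1)]
  have A: "\<forall>v\<in>gj_sym_vals (GBranch ?r (greedy k d (Suc i) S (m + length ?is)) (greedy k d (Suc i) ?T (m + length ?is))) (?xs @ ys @ zs). ratfun_deg v \<le> 4 * k"
    using IH1 IH2 by auto
  have B: "gj_sym_preds (GBranch ?r (greedy k d (Suc i) S (m + length ?is)) (greedy k d (Suc i) ?T (m + length ?is))) (?xs @ ys @ zs) \<subseteq> PS k d"
    using IH1 IH2 pv vr by auto
  have l: "length (?xs @ ys) = m" using pr(1) .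
  show ?case
    unfolding g vals_emit preds_emit zs(1) l
    using v1' A B by blast
qed

lemma PS_card: "card (PS k d) \<le> 2 ^ k"
proof -
  have sub: "{T. sorted_wrt (<) T \<and> set T \<subseteq> {..<k}} \<subseteq> sorted_list_of_set ` Pow {..<k}"
  proof
    fix T assume "T \<in> {T. sorted_wrt (<) T \<and> set T \<subseteq> {..<k}}"
    then have "sorted_wrt (<) T" "set T \<subseteq> {..<k}" by auto
    then have "T = sorted_list_of_set (set T)"
      by (simp add: sorted_list_of_set.idem_if_sorted_distinct strict_sorted_iff)
    then show "T \<in> sorted_list_of_set ` Pow {..<k}" using \<open>set T \<subseteq> {..<k}\<close> by blast
  qed
  have "PS k d \<subseteq> (\<lambda>T. eval (gj_inputs (k * d)) (predE d T)) ` sorted_list_of_set ` Pow {..<k}"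
    unfolding PS_def using sub by blast
  then have "card (PS k d) \<le> card ((\<lambda>T. eval (gj_inputs (k * d)) (predE d T)) ` sorted_list_of_set ` Pow {..<k})"
    by (intro card_mono) auto
  also have "\<dots> \<le> card (sorted_list_of_set ` Pow {..<k})" by (rule card_image_le) auto
  also have "\<dots> \<le> card (Pow {..<k::nat})" by (rule card_image_le) auto
  also have "\<dots> = 2 ^ k" by (simp add: card_Pow)
  finally show ?thesis .
qed

lemma degree_le:
  assumes "\<forall>v\<in>gj_sym_vals P (gj_inputs n). ratfun_deg v \<le> B" "1 \<le> B"
  shows "gj_degree n P \<le> B"
  unfolding gj_degree_def using assms finite_vals[of P "gj_inputs n"] by auto


lemma PS_finite: "finite (PS k d)"
proof -
  have sub: "{T. sorted_wrt (<) T \<and> set T \<subseteq> {..<k}} \<subseteq> sorted_list_of_set ` Pow {..<k}"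
  proof
    fix T assume "T \<in> {T. sorted_wrt (<) T \<and> set T \<subseteq> {..<k}}"
    then have "sorted_wrt (<) T" "set T \<subseteq> {..<k}" by auto
    then have "T = sorted_list_of_set (set T)"
      by (simp add: sorted_list_of_set.idem_if_sorted_distinct strict_sorted_iff)
    then show "T \<in> sorted_list_of_set ` Pow {..<k}" using \<open>set T \<subseteq> {..<k}\<close> by blast
  qed
  have "PS k d \<subseteq> (\<lambda>T. eval (gj_inputs (k * d)) (predE d T)) ` sorted_list_of_set ` Pow {..<k}"
    unfolding PS_def using sub by blast
  then show ?thesis by (rule finite_subset) auto
qed

lemma subm_all: "Z \<in> carrier_mat k d \<Longrightarrow> subm Z [0..<k] = Z"
  by (rule eq_matI) (auto simp: subm_def)

lemma inrow_all: "r < k \<Longrightarrow> inrow Z [0..<k] r"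
  unfolding inrow_def
proof (intro exI[of _ "\<lambda>a. if a = r then 1 else 0"] allI impI)
  fix j assume rk: "r < k"
  have "(\<Sum>a<length [0..<k]. (if a = r then 1 else 0) * Z $$ ([0..<k] ! a, j)) = (\<Sum>a<k. if a = r then Z $$ (a, j) else 0)"
    by (intro sum.cong) auto
  also have "\<dots> = Z $$ (r, j)" using rk by (simp add: sum.delta)
  finally show "Z $$ (r, j) = (\<Sum>a<length [0..<k]. (if a = r then 1 else 0) * Z $$ ([0..<k] ! a, j))" by simp
qed

theorem lemma5p2:
  shows "(\<exists>C::nat. \<forall>k d. k \<ge> 1 \<longrightarrow> d \<ge> 1 \<longrightarrow>
            (\<exists>P. gj_computes_proj k d (\<lambda>Z. True) P \<and>
                 gj_degree (k * d) P \<le> C * k \<and>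
                 gj_pred_complexity (k * d) P \<le> 2 ^ k))
       \<and> (\<exists>C::nat. \<forall>k d. k \<ge> 1 \<longrightarrow> d \<ge> 1 \<longrightarrow>
            (\<exists>P. gj_computes_proj k d (\<lambda>Z. vec_space.rank k Z = k) P \<and>
                 gj_degree (k * d) P \<le> C * k \<and>
                 gj_pred_complexity (k * d) P = 0))"
proof (intro conjI exI[of _ 4] allI impI)
  fix k d :: nat assume k1: "k \<ge> 1" and d1: "d \<ge> 1"
  then have dk: "0 < d" "0 < k" by auto
  let ?P = "greedy k d 0 [] (k * d)"
  show "\<exists>P. gj_computes_proj k d (\<lambda>Z. True) P \<and> gj_degree (k * d) P \<le> 4 * k \<and> gj_pred_complexity (k * d) P \<le> 2 ^ k"
  proof (intro exI[of _ ?P] conjI)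
    show "gj_computes_proj k d (\<lambda>Z. True) ?P"
      unfolding gj_computes_proj_def
    proof (intro conjI allI impI)
      show "gj_wf ?P (k * d)" by (rule greedy_wf) (use dk in auto)
    next
      fix xs :: "real list" assume xs: "length xs = k * d"
      let ?Z = "mat_of_input k d xs"
      have Z: "?Z \<in> carrier_mat k d" using mat_of_input_props by blast
      have "subm ?Z [] * transpose_mat (subm ?Z []) \<in> carrier_mat 0 0"
        using subm_carrier'[OF Z, of "[]"] by simp
      then have d0: "det (subm ?Z [] * transpose_mat (subm ?Z [])) \<noteq> 0" using det_empty by simp
      show "gj_exec ?P xs = Some (mat_entries (pinv ?Z * ?Z))"
        using greedy_exec[OF xs dk refl, of "[]" "k * d" "[]" 0] xs d0 by simp
    qed
    have S: "(\<forall>v\<in>gj_sym_vals ?P (gj_inputs (k * d) @ []). ratfun_deg v \<le> 4 * k) \<and>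
       gj_sym_preds ?P (gj_inputs (k * d) @ []) \<subseteq> PS k d"
      by (rule greedy_sym[OF dk]) auto
    show "gj_degree (k * d) ?P \<le> 4 * k" by (rule degree_le) (use S dk in auto)
    have "gj_pred_complexity (k * d) ?P \<le> card (PS k d)"
      unfolding gj_pred_complexity_def using S PS_finite by (intro card_mono) auto
    then show "gj_pred_complexity (k * d) ?P \<le> 2 ^ k" using PS_card[of k d] by linarith
  qed
next
  fix k d :: nat assume k1: "k \<ge> 1" and d1: "d \<ge> 1"
  then have dk: "0 < d" "0 < k" by auto
  let ?P = "outP d [0..<k] (k * d)"
  have S: "set [0..<k] \<subseteq> {..<k}" "length [0..<k] \<le> k" by auto
  show "\<exists>P. gj_computes_proj k d (\<lambda>Z. vec_space.rank k Z = k) P \<and> gj_degree (k * d) P \<le> 4 * k \<and> gj_pred_complexity (k * d) P = 0"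
  proof (intro exI[of _ ?P] conjI)
    show "gj_computes_proj k d (\<lambda>Z. vec_space.rank k Z = k) ?P"
      unfolding gj_computes_proj_def
    proof (intro conjI allI impI)
      show "gj_wf ?P (k * d)" by (rule outP_wf[of k d "k * d" "[0..<k]"]) (use dk in auto)
    next
      fix xs :: "real list" assume xs: "length xs = k * d" and r: "vec_space.rank k (mat_of_input k d xs) = k"
      let ?Z = "mat_of_input k d xs"
      have Z: "?Z \<in> carrier_mat k d" using mat_of_input_props by blast
      have dS: "det (subm ?Z [0..<k] * transpose_mat (subm ?Z [0..<k])) \<noteq> 0"
        using fullrank_det[OF Z r] subm_all[OF Z] by simp
      have rows: "\<forall>r<k. inrow ?Z [0..<k] r" using inrow_all by blast
      show "gj_exec ?P xs = Some (mat_entries (pinv ?Z * ?Z))"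
        using outP_exec[OF xs dk S refl dS rows, of "[]" "k * d"] xs by simp
    qed
    have O: "(\<forall>v\<in>gj_sym_vals ?P (gj_inputs (k * d) @ []). ratfun_deg v \<le> 4 * k) \<and>
         gj_sym_preds ?P (gj_inputs (k * d) @ []) = {}"
      by (rule outP_sym[OF S dk]) simp
    show "gj_degree (k * d) ?P \<le> 4 * k" by (rule degree_le) (use O dk in auto)
    show "gj_pred_complexity (k * d) ?P = 0" unfolding gj_pred_complexity_def using O by simp
  qed
qed


end
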